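(* Let $f\in F$ and suppose that left-multiplying $f$ by $x_1$ cancels a caret from the bottom forest, i.e. in the reduced forest diagram of $f$ the top trees $T_0$ and $T_1$ are both trivial and their two leaves are exactly the two leaf children of a single bottom caret. Then $\ell(x_1f)=\ell(f)-1$.
   Context: Thompson's group $F$ is realized as the group of all orientation-preserving piecewise-linear homeomorphisms $f$ of $\mathbb R$ with finitely many breakpoints, all breakpoints having dyadic rational coordinates, all slopes integral powers of $2$, and with $f(t)=t-m$ for all sufficiently negative $t$ and $f(t)=t-n$ for all sufficiently positive $t$, for some integers $m,n$. Products are compositions of functions: $fg=f\circ g$. The generators are $x_0(t)=t-1$ and $x_1(t)=t$ for $t\le 0$, $x_1(t)=t/2$ for $0\le t\le 2$, $x_1(t)=t-1$ for $t\ge 2$. A forest diagram for $x_1f$ is obtained from one for $f$ by attaching a new caret to the roots of the top trees $T_0,T_1$ and pointing the top pointer at the combined tree. Forest diagrams: a binary forest is a sequence $(T_i)_{i\in\mathbb Z}$ of finite rooted binary trees (every node has $0$ or $2$ children; internal nodes are called carets; a trivial tree is a single leaf), all but finitely many trivial, together with a pointer marking $T_0$. Tree $T_i$ represents the interval $[i,i+1]$, each caret represents halving the interval of its node, and the leaves of the forest give a dyadic subdivision of $\mathbb R$. A forest diagram for $f$ is a pair of binary forests, the bottom (domain) forest with subdivision $\mathcal D$ and the top (range) forest with subdivision $\mathcal R$, such that $f$ maps each interval of $\mathcal D$ linearly onto an interval of $\mathcal R$; this matches the leaves of the two forests by an order-preserving bijection, so the two forests share one linearly ordered set of leaves (columns).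 A reduction deletes an opposing pair of carets, i.e. a top caret and a bottom caret both of whose children are leaves and which have the same two (matched) leaves. A forest diagram is reduced if no reduction is possible; every element of $F$ has a unique reduced forest diagram. The support of a forest diagram is the smallest set of consecutive columns containing all leaves of nontrivial trees of either forest and the leaves of the two trees marked by the two pointers. A space is a gap between two consecutive columns; the spaces in the support are the gaps between consecutive columns of the support. Labels: in each of the two forests separately (using that forest's own pointer), a space is interior if the leaves on both sides of it belong to the same tree and exterior otherwise; it lies immediately to the left of a caret $c$ of that forest if the leaf immediately to its right is the leftmost leaf descending from $c$. Each space of the support receives a label in each forest: $L$ if it is exterior and to the left of the tree marked by the pointer; otherwise $N$ if it lies immediately to the left of some caret; otherwise $R$ if it is exterior (hence to the right of the marked tree); otherwise $I$ (interior). A space thus has a label pair (top label, bottom label). Weights, by (top, bottom): $(L,L)=2$, $(L,N)=1$, $(L,R)=1$, $(L,I)=1$; $(N,L)=1$, $(N,N)=2$, $(N,R)=2$, $(N,I)=2$; $(R,L)=1$, $(R,N)=2$, $(R,R)=2$, $(R,I)=0$; $(I,L)=1$, $(I,N)=2$, $(I,R)=0$, $(I,I)=0$. For $f\in F$, $\ell(f)=\ell_0(f)+\ell_1(f)$, where $\ell_0(f)$ is the sum of the weights of the spaces in the support of the reduced forest diagram of $f$ and $\ell_1(f)$ is its total number of carets; $\ell(f)$ equals the word length of $f$ with respect to $\{x_0,x_1\}$. *)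

theory Defs
  imports Complex_Main
begin

definition dyadic :: "real \<Rightarrow> bool" where
  "dyadic x \<longleftrightarrow> (\<exists>k::int. \<exists>n::nat. x = real_of_int k / 2 ^ n)"

definition in_F :: "(real \<Rightarrow> real) \<Rightarrow> bool" where
  "in_F f \<longleftrightarrow> (\<exists>ps::real list. \<exists>m n::int.
      ps \<noteq> [] \<and> sorted_wrt (<) ps \<and>
      (\<forall>p\<in>set ps. dyadic p \<and> dyadic (f p)) \<and>
      (\<forall>t. t \<le> hd ps \<longrightarrow> f t = t - real_of_int m) \<and>
      (\<forall>t. last ps \<le> t \<longrightarrow> f t = t - real_of_int n) \<and>
      (\<forall>i. Suc i < length ps \<longrightarrow> (\<exists>k::int. \<forall>t\<in>{ps!i..ps!Suc i}.
            f t = f (ps!i) + (2::real) powi k * (t - ps!i))))"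

definition x0 :: "real \<Rightarrow> real" where
  "x0 t = t - 1"

definition x1 :: "real \<Rightarrow> real" where
  "x1 t = (if t \<le> 0 then t else if t \<le> 2 then t / 2 else t - 1)"

datatype tree = Leaf | Node tree tree

fun leaf_ivs :: "tree \<Rightarrow> real \<Rightarrow> real \<Rightarrow> (real \<times> real) set" where
  "leaf_ivs Leaf a b = {(a, b)}"
| "leaf_ivs (Node l r) a b = leaf_ivs l a ((a + b) / 2) \<union> leaf_ivs r ((a + b) / 2) b"

fun caret_ivs :: "tree \<Rightarrow> real \<Rightarrow> real \<Rightarrow> (real \<times> real) set" where
  "caret_ivs Leaf a b = {}"
| "caret_ivs (Node l r) a b =
     insert (a, b) (caret_ivs l a ((a + b) / 2) \<union> caret_ivs r ((a + b) / 2) b)"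

fun elem_caret_ivs :: "tree \<Rightarrow> real \<Rightarrow> real \<Rightarrow> (real \<times> real) set" where
  "elem_caret_ivs Leaf a b = {}"
| "elem_caret_ivs (Node l r) a b =
     (if l = Leaf \<and> r = Leaf then {(a, b)}
      else elem_caret_ivs l a ((a + b) / 2) \<union> elem_caret_ivs r ((a + b) / 2) b)"

fun ncarets :: "tree \<Rightarrow> nat" where
  "ncarets Leaf = 0"
| "ncarets (Node l r) = Suc (ncarets l + ncarets r)"

text \<open>A forest is indexed by the integers; tree i represents [i,i+1]; the pointer marks tree 0.\<close>
type_synonym forest = "int \<Rightarrow> tree"

definition binary_forest :: "forest \<Rightarrow> bool" where
  "binary_forest F \<longleftrightarrow> finite {i. F i \<noteq> Leaf}"

definition forest_leaves :: "forest \<Rightarrow> (real \<times> real) set" where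
  "forest_leaves F = (\<Union>i. leaf_ivs (F i) (real_of_int i) (real_of_int i + 1))"

definition forest_carets :: "forest \<Rightarrow> (real \<times> real) set" where
  "forest_carets F = (\<Union>i. caret_ivs (F i) (real_of_int i) (real_of_int i + 1))"

definition forest_elem_carets :: "forest \<Rightarrow> (real \<times> real) set" where
  "forest_elem_carets F = (\<Union>i. elem_caret_ivs (F i) (real_of_int i) (real_of_int i + 1))"

text \<open>Spaces of a forest = subdivision points (gaps between consecutive leaves).\<close>
definition forest_points :: "forest \<Rightarrow> real set" where
  "forest_points F = {a. \<exists>b. (a, b) \<in> forest_leaves F}"

text \<open>B = bottom (domain) forest, T = top (range) forest.\<close>
definition forest_diagram :: "(real \<Rightarrow> real) \<Rightarrow> forest \<Rightarrow> forest \<Rightarrow> bool" where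
  "forest_diagram f B T \<longleftrightarrow> binary_forest B \<and> binary_forest T \<and>
     (\<forall>(a, b)\<in>forest_leaves B. (f a, f b) \<in> forest_leaves T \<and>
        (\<forall>t\<in>{a..b}. f t = f a + (f b - f a) / (b - a) * (t - a)))"

definition reduced_forest_diagram :: "(real \<Rightarrow> real) \<Rightarrow> forest \<Rightarrow> forest \<Rightarrow> bool" where
  "reduced_forest_diagram f B T \<longleftrightarrow> forest_diagram f B T \<and>
     \<not> (\<exists>(a, b)\<in>forest_elem_carets B. (f a, f b) \<in> forest_elem_carets T)"

datatype label = LL | NN | RR | II

definition space_label :: "forest \<Rightarrow> real \<Rightarrow> label" where
  "space_label F q =
     (if q \<in> \<int> \<and> q \<le> 0 then LL
      else if (\<exists>b. (q, b) \<in> forest_carets F) then NN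
      else if q \<in> \<int> then RR
      else II)"

fun weight :: "label \<Rightarrow> label \<Rightarrow> nat" where
  "weight LL LL = 2" | "weight LL NN = 1" | "weight LL RR = 1" | "weight LL II = 1"
| "weight NN LL = 1" | "weight NN NN = 2" | "weight NN RR = 2" | "weight NN II = 2"
| "weight RR LL = 1" | "weight RR NN = 2" | "weight RR RR = 2" | "weight RR II = 0"
| "weight II LL = 1" | "weight II NN = 2" | "weight II RR = 0" | "weight II II = 0"

text \<open>A column is a bottom leaf (a,b), matched with top leaf (f a, f b). It is required in the
  support if it is a leaf of a nontrivial tree of either forest or of a marked tree.\<close>
definition support_column :: "(real \<Rightarrow> real) \<Rightarrow> forest \<Rightarrow> forest \<Rightarrow> real \<Rightarrow> real \<Rightarrow> bool" where
  "support_column f B T a b \<longleftrightarrow>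
     (0 \<le> a \<and> b \<le> 1) \<or> B \<lfloor>a\<rfloor> \<noteq> Leaf \<or> (0 \<le> f a \<and> f b \<le> 1) \<or> T \<lfloor>f a\<rfloor> \<noteq> Leaf"

text \<open>Spaces of the support, as points of the bottom subdivision (the corresponding top point is f p).\<close>
definition support_spaces :: "(real \<Rightarrow> real) \<Rightarrow> forest \<Rightarrow> forest \<Rightarrow> real set" where
  "support_spaces f B T = {p \<in> forest_points B.
      (\<exists>(a, b)\<in>forest_leaves B. support_column f B T a b \<and> b \<le> p) \<and>
      (\<exists>(a, b)\<in>forest_leaves B. support_column f B T a b \<and> p \<le> a)}"

definition ell0_diag :: "(real \<Rightarrow> real) \<Rightarrow> forest \<Rightarrow> forest \<Rightarrow> nat" where
  "ell0_diag f B T = (\<Sum>p\<in>support_spaces f B T. weight (space_label T (f p)) (space_label B p))"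

definition ell1_diag :: "forest \<Rightarrow> forest \<Rightarrow> nat" where
  "ell1_diag B T = (\<Sum>i\<in>{i. B i \<noteq> Leaf}. ncarets (B i)) + (\<Sum>i\<in>{i. T i \<noteq> Leaf}. ncarets (T i))"

definition ell :: "(real \<Rightarrow> real) \<Rightarrow> nat" where
  "ell f = (THE n. \<exists>B T. reduced_forest_diagram f B T \<and> n = ell0_diag f B T + ell1_diag B T)"

end

theory Submission
  imports Defs
begin



fun nodes :: "tree \<Rightarrow> real \<Rightarrow> real \<Rightarrow> (real \<times> real) set" where
  "nodes Leaf a b = {(a,b)}"
| "nodes (Node l r) a b = insert (a,b) (nodes l a ((a+b)/2) \<union> nodes r ((a+b)/2) b)"

fun meet :: "tree \<Rightarrow> tree \<Rightarrow> tree" where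
  "meet (Node l r) (Node l' r') = Node (meet l l') (meet r r')"
| "meet _ _ = Leaf"

lemma nodes_eq: "nodes t a b = caret_ivs t a b \<union> leaf_ivs t a b"
  by (induction t arbitrary: a b) auto

lemma root_node: "(a,b) \<in> nodes t a b"
  by (cases t) auto

lemma nodes_bounds: "(u,v) \<in> nodes t a b \<Longrightarrow> a < b \<Longrightarrow> a \<le> u \<and> u < v \<and> v \<le> b"
proof (induction t arbitrary: a b)
  case Leaf then show ?case by auto
next
  case (Node l r)
  have m: "a < (a+b)/2" "(a+b)/2 < b" using Node.prems by auto
  show ?case using Node.prems(1) Node.IH(1)[OF _ m(1)] Node.IH(2)[OF _ m(2)] m by force
qed

lemma leaf_bounds: "(u,v) \<in> leaf_ivs t a b \<Longrightarrow> a < b \<Longrightarrow> a \<le> u \<and> u < v \<and> v \<le> b"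
  using nodes_bounds nodes_eq by blast

lemma caret_bounds: "(u,v) \<in> caret_ivs t a b \<Longrightarrow> a < b \<Longrightarrow> a \<le> u \<and> u < v \<and> v \<le> b"
  using nodes_bounds nodes_eq by blast

lemma elem_sub_caret: "elem_caret_ivs t a b \<subseteq> caret_ivs t a b"
proof (induction t arbitrary: a b)
  case (Node l r)
  then show ?case by (cases "l = Leaf \<and> r = Leaf") (auto, (meson subsetD)+)
qed simp

lemma nodes_nested:
  "(u,v) \<in> nodes t1 a b \<Longrightarrow> (u',v') \<in> nodes t2 a b \<Longrightarrow> a < b \<Longrightarrow>
   (u \<le> u' \<and> v' \<le> v) \<or> (u' \<le> u \<and> v \<le> v') \<or> v \<le> u' \<or> v' \<le> u"
proof (induction t1 arbitrary: t2 a b)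
  case Leaf then show ?case using nodes_bounds[OF Leaf(2)] by auto
next
  case (Node l r)
  define m where "m = (a+b)/2"
  have m: "a < m" "m < b" using Node.prems by (auto simp: m_def)
  show ?case
  proof (cases "(u,v) = (a,b)")
    case True then show ?thesis using nodes_bounds[OF Node(4) Node(5)] by auto
  next
    case False
    then have uv: "(u,v) \<in> nodes l a m \<or> (u,v) \<in> nodes r m b" using Node.prems(1) by (auto simp: m_def)
    have bl: "(u,v) \<in> nodes l a m \<Longrightarrow> a \<le> u \<and> u < v \<and> v \<le> m" using nodes_bounds m by blast
    have br: "(u,v) \<in> nodes r m b \<Longrightarrow> m \<le> u \<and> u < v \<and> v \<le> b" using nodes_bounds m by blast
    show ?thesis
    proof (cases t2)
      case Leaf then show ?thesis using Node.prems(2) bl br uv m by auto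
    next
      case (Node l' r')
      show ?thesis
      proof (cases "(u',v') = (a,b)")
        case True then show ?thesis using bl br uv m by auto
      next
        case False
        then have uv': "(u',v') \<in> nodes l' a m \<or> (u',v') \<in> nodes r' m b"
          using Node.prems(2) \<open>t2 = Node l' r'\<close> by (auto simp: m_def)
        have bl': "(u',v') \<in> nodes l' a m \<Longrightarrow> a \<le> u' \<and> u' < v' \<and> v' \<le> m" using nodes_bounds m by blast
        have br': "(u',v') \<in> nodes r' m b \<Longrightarrow> m \<le> u' \<and> u' < v' \<and> v' \<le> b" using nodes_bounds m by blast
        show ?thesis
          using uv uv' bl br bl' br' Node.IH(1)[OF _ _ m(1)] Node.IH(2)[OF _ _ m(2)] m
          by (auto simp: m_def)
      qed
    qed
  qed
qed

lemma leaf_root: "(a,b) \<in> leaf_ivs t a b \<Longrightarrow> a < b \<Longrightarrow> t = Leaf"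
proof (cases t)
  case (Node l r)
  assume h: "(a,b) \<in> leaf_ivs t a b" "a < b"
  have "a < (a+b)/2" "(a+b)/2 < b" using h by auto
  then show ?thesis using h Node leaf_bounds[of a b l a "(a+b)/2"] leaf_bounds[of a b r "(a+b)/2" b] by auto
qed simp

lemma leaf_min:
  "(u,v) \<in> leaf_ivs t a b \<Longrightarrow> (u',v') \<in> nodes t a b \<Longrightarrow> u \<le> u' \<Longrightarrow> v' \<le> v \<Longrightarrow> a < b \<Longrightarrow>
   u' = u \<and> v' = v"
proof (induction t arbitrary: a b)
  case Leaf then show ?case by auto
next
  case (Node l r)
  define m where "m = (a+b)/2"
  have m: "a < m" "m < b" using Node.prems by (auto simp: m_def)
  have uv: "(u,v) \<in> leaf_ivs l a m \<or> (u,v) \<in> leaf_ivs r m b" using Node.prems(1) by (auto simp: m_def)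
  have bl: "(u,v) \<in> leaf_ivs l a m \<Longrightarrow> a \<le> u \<and> u < v \<and> v \<le> m" using leaf_bounds m by blast
  have br: "(u,v) \<in> leaf_ivs r m b \<Longrightarrow> m \<le> u \<and> u < v \<and> v \<le> b" using leaf_bounds m by blast
  have uv': "(u',v') = (a,b) \<or> (u',v') \<in> nodes l a m \<or> (u',v') \<in> nodes r m b"
    using Node.prems(2) by (auto simp: m_def)
  have bl': "(u',v') \<in> nodes l a m \<Longrightarrow> a \<le> u' \<and> u' < v' \<and> v' \<le> m" using nodes_bounds m by blast
  have br': "(u',v') \<in> nodes r m b \<Longrightarrow> m \<le> u' \<and> u' < v' \<and> v' \<le> b" using nodes_bounds m by blast
  show ?case using uv uv' bl br bl' br' Node.IH(1)[of a m] Node.IH(2)[of m b] m Node.prems(3,4) by auto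
qed

lemma caret_not_leaf: "(u,v) \<in> caret_ivs t a b \<Longrightarrow> a < b \<Longrightarrow> (u,v) \<notin> leaf_ivs t a b"
proof (induction t arbitrary: a b)
  case Leaf then show ?case by auto
next
  case (Node l r)
  define m where "m = (a+b)/2"
  have m: "a < m" "m < b" using Node.prems by (auto simp: m_def)
  have lb: "\<And>u v. (u,v) \<in> leaf_ivs l a m \<Longrightarrow> a \<le> u \<and> u < v \<and> v \<le> m" using leaf_bounds m by blast
  have rb: "\<And>u v. (u,v) \<in> leaf_ivs r m b \<Longrightarrow> m \<le> u \<and> u < v \<and> v \<le> b" using leaf_bounds m by blast
  have lc: "\<And>u v. (u,v) \<in> caret_ivs l a m \<Longrightarrow> a \<le> u \<and> u < v \<and> v \<le> m" using caret_bounds m by blast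
  have rc: "\<And>u v. (u,v) \<in> caret_ivs r m b \<Longrightarrow> m \<le> u \<and> u < v \<and> v \<le> b" using caret_bounds m by blast
  have c: "(u,v) = (a,b) \<or> (u,v) \<in> caret_ivs l a m \<or> (u,v) \<in> caret_ivs r m b"
    using Node.prems(1) by (auto simp: m_def)
  show ?case
  proof
    assume "(u,v) \<in> leaf_ivs (Node l r) a b"
    then have "(u,v) \<in> leaf_ivs l a m \<or> (u,v) \<in> leaf_ivs r m b" by (auto simp: m_def)
    then show False using c lb[of u v] rb[of u v] lc[of u v] rc[of u v] Node.IH(1)[of a m] Node.IH(2)[of m b] m
      by fastforce
  qed
qed

lemma caret_children:
  "(u,v) \<in> caret_ivs t a b \<Longrightarrow> (u,(u+v)/2) \<in> nodes t a b \<and> ((u+v)/2, v) \<in> nodes t a b"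
  by (induction t arbitrary: a b) (auto simp: root_node)

lemma elem_iff:
  assumes "a < b"
  shows "(u,v) \<in> elem_caret_ivs t a b \<longleftrightarrow>
    (u,v) \<in> caret_ivs t a b \<and> (u,(u+v)/2) \<in> leaf_ivs t a b \<and> ((u+v)/2, v) \<in> leaf_ivs t a b"
  using assms
proof (induction t arbitrary: a b)
  case Leaf then show ?case by auto
next
  case (Node l r)
  define m where "m = (a+b)/2"
  have m: "a < m" "m < b" using Node.prems by (auto simp: m_def)
  have lb: "\<And>u v. (u,v) \<in> leaf_ivs l a m \<Longrightarrow> a \<le> u \<and> u < v \<and> v \<le> m" using leaf_bounds m by blast
  have rb: "\<And>u v. (u,v) \<in> leaf_ivs r m b \<Longrightarrow> m \<le> u \<and> u < v \<and> v \<le> b" using leaf_bounds m by blast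
  have lc: "\<And>u v. (u,v) \<in> caret_ivs l a m \<Longrightarrow> a \<le> u \<and> u < v \<and> v \<le> m" using caret_bounds m by blast
  have rc: "\<And>u v. (u,v) \<in> caret_ivs r m b \<Longrightarrow> m \<le> u \<and> u < v \<and> v \<le> b" using caret_bounds m by blast
  show ?case
  proof (cases "l = Leaf \<and> r = Leaf")
    case True then show ?thesis by (auto simp: m_def)
  next
    case False
    have e: "elem_caret_ivs (Node l r) a b = elem_caret_ivs l a m \<union> elem_caret_ivs r m b"
      using False by (auto simp: m_def)
    show ?thesis
    proof
      assume "(u,v) \<in> elem_caret_ivs (Node l r) a b"
      then show "(u,v) \<in> caret_ivs (Node l r) a b \<and> (u,(u+v)/2) \<in> leaf_ivs (Node l r) a b \<and> ((u+v)/2, v) \<in> leaf_ivs (Node l r) a b"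
        using e Node.IH(1)[OF m(1)] Node.IH(2)[OF m(2)] by (auto simp: m_def)
    next
      assume h: "(u,v) \<in> caret_ivs (Node l r) a b \<and> (u,(u+v)/2) \<in> leaf_ivs (Node l r) a b \<and> ((u+v)/2, v) \<in> leaf_ivs (Node l r) a b"
      have h1: "(u,(u+v)/2) \<in> leaf_ivs l a m \<or> (u,(u+v)/2) \<in> leaf_ivs r m b" using h by (auto simp: m_def)
      have h2: "((u+v)/2,v) \<in> leaf_ivs l a m \<or> ((u+v)/2,v) \<in> leaf_ivs r m b" using h by (auto simp: m_def)
      show "(u,v) \<in> elem_caret_ivs (Node l r) a b"
      proof (cases "(u,v) = (a,b)")
        case True
        have "(a,m) \<in> leaf_ivs l a m" using h1 True rb[of a m] m by (auto simp: m_def)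
        then have "l = Leaf" using leaf_root m by blast
        moreover have "(m,b) \<in> leaf_ivs r m b" using h2 True lb[of m b] m by (auto simp: m_def)
        then have "r = Leaf" using leaf_root m by blast
        ultimately show ?thesis using False by simp
      next
        case False
        then have c: "(u,v) \<in> caret_ivs l a m \<or> (u,v) \<in> caret_ivs r m b" using h by (auto simp: m_def)
        show ?thesis
        proof (cases "(u,v) \<in> caret_ivs l a m")
          case True
          then have "(u,(u+v)/2) \<in> leaf_ivs l a m" "((u+v)/2,v) \<in> leaf_ivs l a m"
            using h1 h2 lc[of u v] rb[of u "(u+v)/2"] rb[of "(u+v)/2" v] by auto
          then show ?thesis using e Node.IH(1)[OF m(1)] True by auto
        next
          case F2: False
          then have cr: "(u,v) \<in> caret_ivs r m b" using c by auto
          then have "(u,(u+v)/2) \<in> leaf_ivs r m b" "((u+v)/2,v) \<in> leaf_ivs r m b"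
            using h1 h2 rc[of u v] lb[of u "(u+v)/2"] lb[of "(u+v)/2" v] by auto
          then show ?thesis using e Node.IH(2)[OF m(2)] cr by auto
        qed
      qed
    qed
  qed
qed

lemma caret_has_elem:
  "(u,v) \<in> caret_ivs t a b \<Longrightarrow> a < b \<Longrightarrow> \<exists>u' v'. (u',v') \<in> elem_caret_ivs t a b \<and> u \<le> u' \<and> v' \<le> v"
proof (induction t arbitrary: a b u v)
  case Leaf then show ?case by auto
next
  case (Node l r)
  define m where "m = (a+b)/2"
  have m: "a < m" "m < b" using Node.prems by (auto simp: m_def)
  show ?case
  proof (cases "l = Leaf \<and> r = Leaf")
    case True then show ?thesis using Node.prems by auto
  next
    case False
    have e: "elem_caret_ivs (Node l r) a b = elem_caret_ivs l a m \<union> elem_caret_ivs r m b"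
      using False by (auto simp: m_def)
    show ?thesis
    proof (cases "(u,v) = (a,b)")
      case True
      show ?thesis
      proof (cases "l = Leaf")
        case True
        then obtain r1 r2 where r: "r = Node r1 r2" using False by (cases r) auto
        then have "(m,b) \<in> caret_ivs r m b" by simp
        then obtain u' v' where "(u',v') \<in> elem_caret_ivs r m b" "m \<le> u'" "v' \<le> b"
          using Node.IH(2)[OF _ m(2)] by blast
        then show ?thesis using e \<open>(u,v) = (a,b)\<close> m by force
      next
        case False
        then obtain r1 r2 where r: "l = Node r1 r2" by (cases l) auto
        then have "(a,m) \<in> caret_ivs l a m" by simp
        then obtain u' v' where "(u',v') \<in> elem_caret_ivs l a m" "a \<le> u'" "v' \<le> m"
          using Node.IH(1)[OF _ m(1)] by blast
        then show ?thesis using e \<open>(u,v) = (a,b)\<close> m by force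
      qed
    next
      case False
      then have "(u,v) \<in> caret_ivs l a m \<or> (u,v) \<in> caret_ivs r m b" using Node.prems by (auto simp: m_def)
      then show ?thesis using e Node.IH(1)[OF _ m(1)] Node.IH(2)[OF _ m(2)] by blast
    qed
  qed
qed

lemma cover: "a \<le> x \<Longrightarrow> x \<le> b \<Longrightarrow> \<exists>u v. (u,v) \<in> leaf_ivs t a b \<and> u \<le> x \<and> x \<le> v"
proof (induction t arbitrary: a b)
  case Leaf then show ?case by auto
next
  case (Node l r)
  show ?case
  proof (cases "x \<le> (a+b)/2")
    case True then show ?thesis using Node.IH(1)[of a "(a+b)/2"] Node.prems by auto
  next
    case False then show ?thesis using Node.IH(2)[of "(a+b)/2" b] Node.prems by auto
  qed
qed




lemma meet_Leaf2[simp]: "meet t Leaf = Leaf"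
  by (cases t) auto

lemma meet_comm: "meet t1 t2 = meet t2 t1"
  by (induction t1 t2 rule: meet.induct) auto

lemma meet_leaves: "leaf_ivs (meet t1 t2) a b \<subseteq> leaf_ivs t1 a b \<union> leaf_ivs t2 a b"
proof (induction t1 t2 arbitrary: a b rule: meet.induct)
  case (1 l r l' r')
  show ?case using "1.IH"(1)[of a "(a+b)/2"] "1.IH"(2)[of "(a+b)/2" b] by auto
qed auto

lemma meet_nodes: "nodes (meet t1 t2) a b \<subseteq> nodes t1 a b \<inter> nodes t2 a b"
proof (induction t1 t2 arbitrary: a b rule: meet.induct)
  case (1 l r l' r')
  show ?case using "1.IH"(1)[of a "(a+b)/2"] "1.IH"(2)[of "(a+b)/2" b] by auto
qed (auto simp: root_node)

lemma meet_leaf_in: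
  "K \<in> leaf_ivs t1 a b \<Longrightarrow> K \<in> nodes t2 a b \<Longrightarrow> a < b \<Longrightarrow> K \<in> leaf_ivs (meet t1 t2) a b"
proof (induction t1 arbitrary: t2 a b)
  case Leaf then show ?case by (cases t2) auto
next
  case (Node l r)
  obtain u v where K: "K = (u,v)" by (cases K)
  define m where "m = (a+b)/2"
  have m: "a < m" "m < b" using Node.prems by (auto simp: m_def)
  have lb: "\<And>u v. (u,v) \<in> leaf_ivs l a m \<Longrightarrow> a \<le> u \<and> u < v \<and> v \<le> m" using leaf_bounds m by blast
  have rb: "\<And>u v. (u,v) \<in> leaf_ivs r m b \<Longrightarrow> m \<le> u \<and> u < v \<and> v \<le> b" using leaf_bounds m by blast
  show ?case
  proof (cases t2)
    case Leaf
    then have "K = (a,b)" using Node.prems by auto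
    then show ?thesis using Node.prems(1) lb[of a b] rb[of a b] m by (auto simp: m_def)
  next
    case (Node l' r')
    have lb': "\<And>u v. (u,v) \<in> nodes l' a m \<Longrightarrow> a \<le> u \<and> u < v \<and> v \<le> m" using nodes_bounds m by blast
    have rb': "\<And>u v. (u,v) \<in> nodes r' m b \<Longrightarrow> m \<le> u \<and> u < v \<and> v \<le> b" using nodes_bounds m by blast
    have k1: "(u,v) \<in> leaf_ivs l a m \<or> (u,v) \<in> leaf_ivs r m b" using Node.prems K by (auto simp: m_def)
    have k2: "(u,v) = (a,b) \<or> (u,v) \<in> nodes l' a m \<or> (u,v) \<in> nodes r' m b"
      using Node.prems K \<open>t2 = Node l' r'\<close> by (auto simp: m_def)
    show ?thesis
      using k1 k2 lb[of u v] rb[of u v] lb'[of u v] rb'[of u v] m Node.IH(1)[OF _ _ m(1), of l'] Node.IH(2)[OF _ _ m(2), of r']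
        \<open>t2 = Node l' r'\<close> K by (auto simp: m_def)
  qed
qed

lemma meet_eq_left:
  "leaf_ivs (meet t1 t2) a b \<subseteq> leaf_ivs t1 a b \<Longrightarrow> a < b \<Longrightarrow> meet t1 t2 = t1"
proof (induction t1 arbitrary: t2 a b)
  case Leaf then show ?case by (cases t2) auto
next
  case (Node l r)
  define m where "m = (a+b)/2"
  have m: "a < m" "m < b" using Node.prems by (auto simp: m_def)
  have lb: "\<And>u v. (u,v) \<in> leaf_ivs l a m \<Longrightarrow> a \<le> u \<and> u < v \<and> v \<le> m" using leaf_bounds m by blast
  have rb: "\<And>u v. (u,v) \<in> leaf_ivs r m b \<Longrightarrow> m \<le> u \<and> u < v \<and> v \<le> b" using leaf_bounds m by blast
  show ?case
  proof (cases t2)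
    case Leaf
    then have "(a,b) \<in> leaf_ivs (Node l r) a b" using Node.prems by auto
    then show ?thesis using lb[of a b] rb[of a b] m by (auto simp: m_def)
  next
    case (Node l' r')
    have lb2: "\<And>u v. (u,v) \<in> leaf_ivs (meet l l') a m \<Longrightarrow> a \<le> u \<and> u < v \<and> v \<le> m" using leaf_bounds m by blast
    have rb2: "\<And>u v. (u,v) \<in> leaf_ivs (meet r r') m b \<Longrightarrow> m \<le> u \<and> u < v \<and> v \<le> b" using leaf_bounds m by blast
    have s: "leaf_ivs (meet l l') a m \<union> leaf_ivs (meet r r') m b \<subseteq> leaf_ivs l a m \<union> leaf_ivs r m b"
      using Node.prems(1) \<open>t2 = Node l' r'\<close> by (simp add: m_def)
    have "leaf_ivs (meet l l') a m \<subseteq> leaf_ivs l a m"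
    proof
      fix K assume "K \<in> leaf_ivs (meet l l') a m"
      moreover obtain u v where "K = (u,v)" by (cases K)
      ultimately show "K \<in> leaf_ivs l a m" using s lb2[of u v] rb[of u v] by auto
    qed
    moreover have "leaf_ivs (meet r r') m b \<subseteq> leaf_ivs r m b"
    proof
      fix K assume "K \<in> leaf_ivs (meet r r') m b"
      moreover obtain u v where "K = (u,v)" by (cases K)
      ultimately show "K \<in> leaf_ivs r m b" using s rb2[of u v] lb[of u v] by auto
    qed
    ultimately show ?thesis using Node.IH(1)[OF _ m(1)] Node.IH(2)[OF _ m(2)] \<open>t2 = Node l' r'\<close> by auto
  qed
qed

lemma node_from_leaves:
  "K \<in> nodes t1 a b \<Longrightarrow>
   (\<forall>L \<in> leaf_ivs t2 a b. (fst K \<le> fst L \<and> snd L \<le> snd K) \<or> snd L \<le> fst K \<or> snd K \<le> fst L) \<Longrightarrow>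
   a < b \<Longrightarrow> K \<in> nodes t2 a b"
proof (induction t2 arbitrary: t1 a b)
  case Leaf
  obtain u v where K: "K = (u,v)" by (cases K)
  then show ?case using Leaf nodes_bounds[of u v t1 a b] by auto
next
  case (Node l r)
  obtain u v where K: "K = (u,v)" by (cases K)
  define m where "m = (a+b)/2"
  have m: "a < m" "m < b" using Node.prems by (auto simp: m_def)
  show ?case
  proof (cases "K = (a,b)")
    case True then show ?thesis by auto
  next
    case False
    then obtain l1 r1 where t1: "t1 = Node l1 r1" using Node.prems(1) by (cases t1) auto
    then have "K \<in> nodes l1 a m \<or> K \<in> nodes r1 m b" using False Node.prems(1) by (auto simp: m_def)
    moreover have "\<forall>L \<in> leaf_ivs l a m. (fst K \<le> fst L \<and> snd L \<le> snd K) \<or> snd L \<le> fst K \<or> snd K \<le> fst L"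
      using Node.prems(2) by (auto simp: m_def)
    moreover have "\<forall>L \<in> leaf_ivs r m b. (fst K \<le> fst L \<and> snd L \<le> snd K) \<or> snd L \<le> fst K \<or> snd K \<le> fst L"
      using Node.prems(2) by (auto simp: m_def)
    ultimately show ?thesis using Node.IH(1)[OF _ _ m(1)] Node.IH(2)[OF _ _ m(2)] by (auto simp: m_def)
  qed
qed

inductive desc :: "real \<times> real \<Rightarrow> real \<times> real \<Rightarrow> bool" where
  desc_refl: "desc K K"
| desc_l: "desc K (u,v) \<Longrightarrow> desc K (u,(u+v)/2)"
| desc_r: "desc K (u,v) \<Longrightarrow> desc K ((u+v)/2,v)"

lemma desc_trans: "desc P E \<Longrightarrow> desc K P \<Longrightarrow> desc K E"
  by (induction rule: desc.induct) (auto intro: desc.intros)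

lemma desc_sub0: "desc K E \<Longrightarrow> fst K < snd K \<Longrightarrow> fst K \<le> fst E \<and> snd E \<le> snd K \<and> fst E < snd E"
  by (induction rule: desc.induct) auto

lemma desc_sub: "desc (u,v) E \<Longrightarrow> u < v \<Longrightarrow> u \<le> fst E \<and> snd E \<le> v \<and> fst E < snd E"
  using desc_sub0 by fastforce

lemma node_desc_root: "N \<in> nodes t a b \<Longrightarrow> desc (a,b) N"
proof (induction t arbitrary: a b)
  case Leaf then show ?case by (auto intro: desc.intros)
next
  case (Node l r)
  have d: "desc (a,b) (a,(a+b)/2)" "desc (a,b) ((a+b)/2,b)" by (auto intro: desc.intros)
  have "N = (a,b) \<or> N \<in> nodes l a ((a+b)/2) \<or> N \<in> nodes r ((a+b)/2) b" using Node.prems by auto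
  then show ?case
  proof (elim disjE)
    assume "N \<in> nodes l a ((a+b)/2)"
    then show ?thesis using Node.IH(1) d(1) desc_trans by blast
  next
    assume "N \<in> nodes r ((a+b)/2) b"
    then show ?thesis using Node.IH(2) d(2) desc_trans by blast
  qed (auto intro: desc.intros)
qed

lemma desc_nodes:
  "N \<in> nodes t a b \<Longrightarrow> N' \<in> nodes t a b \<Longrightarrow> fst N \<le> fst N' \<Longrightarrow> snd N' \<le> snd N \<Longrightarrow> a < b \<Longrightarrow> desc N N'"
proof (induction t arbitrary: a b)
  case Leaf then show ?case by (auto intro: desc.intros)
next
  case (Node l r)
  define m where "m = (a+b)/2"
  have m: "a < m" "m < b" using Node.prems by (auto simp: m_def)
  obtain u v where N: "N = (u,v)" by (cases N)
  obtain u' v' where N': "N' = (u',v')" by (cases N')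
  have lb: "\<And>u v. (u,v) \<in> nodes l a m \<Longrightarrow> a \<le> u \<and> u < v \<and> v \<le> m" using nodes_bounds m by blast
  have rb: "\<And>u v. (u,v) \<in> nodes r m b \<Longrightarrow> m \<le> u \<and> u < v \<and> v \<le> b" using nodes_bounds m by blast
  show ?case
  proof (cases "N = (a,b)")
    case True then show ?thesis using node_desc_root Node.prems by blast
  next
    case False
    then have n1: "(u,v) \<in> nodes l a m \<or> (u,v) \<in> nodes r m b" using Node.prems N by (auto simp: m_def)
    have n2: "(u',v') = (a,b) \<or> (u',v') \<in> nodes l a m \<or> (u',v') \<in> nodes r m b" using Node.prems N' by (auto simp: m_def)
    show ?thesis using n1 n2 lb[of u v] rb[of u v] lb[of u' v'] rb[of u' v'] Node.prems(3,4) N N' m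
       Node.IH(1)[OF _ _ _ _ m(1)] Node.IH(2)[OF _ _ _ _ m(2)] by fastforce
  qed
qed

lemma desc_transport0:
  assumes "desc K E" "fst K < snd K" "\<forall>t\<in>{fst K..snd K}. f t = f (fst K) + c * (t - fst K)"
  shows "desc (f (fst K), f (snd K)) (f (fst E), f (snd E))"
  using assms
proof (induction rule: desc.induct)
  case (desc_refl K) show ?case by (simp add: desc.desc_refl)
next
  case (desc_l K u' v')
  obtain u v where K: "K = (u,v)" by (cases K)
  have s: "u \<le> u'" "v' \<le> v" "u' < v'" using desc_sub[OF desc_l(1)[unfolded K]] desc_l(3) K by auto
  have e1: "f u' = f u + c * (u' - u)" by (rule bspec[OF desc_l(4)[unfolded K fst_conv snd_conv]]) (use s in auto)
  have e2: "f v' = f u + c * (v' - u)" by (rule bspec[OF desc_l(4)[unfolded K fst_conv snd_conv]]) (use s in auto)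
  have e3: "f ((u'+v')/2) = f u + c * ((u'+v')/2 - u)" by (rule bspec[OF desc_l(4)[unfolded K fst_conv snd_conv]]) (use s in auto)
  have m: "f ((u'+v')/2) = (f u' + f v')/2" unfolding e1 e2 e3 by (simp add: field_simps)
  have IH: "desc (f (fst K), f (snd K)) (f u', f v')" using desc_l.IH[OF desc_l(3,4)] by simp
  show ?case unfolding fst_conv snd_conv m by (rule desc.desc_l[OF IH])
next
  case (desc_r K u' v')
  obtain u v where K: "K = (u,v)" by (cases K)
  have s: "u \<le> u'" "v' \<le> v" "u' < v'" using desc_sub[OF desc_r(1)[unfolded K]] desc_r(3) K by auto
  have e1: "f u' = f u + c * (u' - u)" by (rule bspec[OF desc_r(4)[unfolded K fst_conv snd_conv]]) (use s in auto)
  have e2: "f v' = f u + c * (v' - u)" by (rule bspec[OF desc_r(4)[unfolded K fst_conv snd_conv]]) (use s in auto)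
  have e3: "f ((u'+v')/2) = f u + c * ((u'+v')/2 - u)" by (rule bspec[OF desc_r(4)[unfolded K fst_conv snd_conv]]) (use s in auto)
  have m: "f ((u'+v')/2) = (f u' + f v')/2" unfolding e1 e2 e3 by (simp add: field_simps)
  have IH: "desc (f (fst K), f (snd K)) (f u', f v')" using desc_r.IH[OF desc_r(3,4)] by simp
  show ?case unfolding fst_conv snd_conv m by (rule desc.desc_r[OF IH])
qed

lemma desc_transport:
  assumes "desc (u,v) E" "u < v" "\<forall>t\<in>{u..v}. f t = f u + c * (t - u)"
  shows "desc (f u, f v) (f (fst E), f (snd E))"
proof -
  have "desc (f (fst (u,v)), f (snd (u,v))) (f (fst E), f (snd E))"
    apply (rule desc_transport0)
    unfolding fst_conv snd_conv
      apply (rule assms(1))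
     apply (rule assms(2))
    apply (rule assms(3))
    done
  then show ?thesis by (simp only: fst_conv snd_conv)
qed




definition fnodes :: "forest \<Rightarrow> (real \<times> real) set" where
  "fnodes F = (\<Union>i. nodes (F i) (real_of_int i) (real_of_int i + 1))"

lemma fnodes_eq: "fnodes F = forest_carets F \<union> forest_leaves F"
  unfolding fnodes_def forest_carets_def forest_leaves_def nodes_eq by auto

lemma fleaves_iff: "(u,v) \<in> forest_leaves F \<longleftrightarrow> (\<exists>i. (u,v) \<in> leaf_ivs (F i) (real_of_int i) (real_of_int i + 1))"
  unfolding forest_leaves_def by auto

lemma fcarets_iff: "(u,v) \<in> forest_carets F \<longleftrightarrow> (\<exists>i. (u,v) \<in> caret_ivs (F i) (real_of_int i) (real_of_int i + 1))"
  unfolding forest_carets_def by auto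

lemma felem_iff0: "(u,v) \<in> forest_elem_carets F \<longleftrightarrow> (\<exists>i. (u,v) \<in> elem_caret_ivs (F i) (real_of_int i) (real_of_int i + 1))"
  unfolding forest_elem_carets_def by auto

lemma fnodes_iff: "(u,v) \<in> fnodes F \<longleftrightarrow> (\<exists>i. (u,v) \<in> nodes (F i) (real_of_int i) (real_of_int i + 1))"
  unfolding fnodes_def by auto

lemma tree_nodes_bounds: "(u,v) \<in> nodes t (real_of_int i) (real_of_int i + 1) \<Longrightarrow>
   real_of_int i \<le> u \<and> u < v \<and> v \<le> real_of_int i + 1"
  using nodes_bounds by force

lemma tree_leaf_bounds: "(u,v) \<in> leaf_ivs t (real_of_int i) (real_of_int i + 1) \<Longrightarrow>
   real_of_int i \<le> u \<and> u < v \<and> v \<le> real_of_int i + 1"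
  using tree_nodes_bounds nodes_eq by blast

lemma tree_caret_bounds: "(u,v) \<in> caret_ivs t (real_of_int i) (real_of_int i + 1) \<Longrightarrow>
   real_of_int i \<le> u \<and> u < v \<and> v \<le> real_of_int i + 1"
  using tree_nodes_bounds nodes_eq by blast

lemma floor_eq_of_bounds: "real_of_int i \<le> u \<Longrightarrow> u < real_of_int i + 1 \<Longrightarrow> \<lfloor>u\<rfloor> = i"
  by linarith

lemma fnode_bounds: "(u,v) \<in> fnodes F \<Longrightarrow> u < v"
  using fnodes_iff tree_nodes_bounds by blast

lemma fleaf_bounds: "(u,v) \<in> forest_leaves F \<Longrightarrow> u < v"
  using fnode_bounds fnodes_eq by blast

lemma fcaret_bounds: "(u,v) \<in> forest_carets F \<Longrightarrow> u < v"
  using fnode_bounds fnodes_eq by blast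

lemma f_nested:
  assumes "(u,v) \<in> fnodes F" "(u',v') \<in> fnodes G"
  shows "(u \<le> u' \<and> v' \<le> v) \<or> (u' \<le> u \<and> v \<le> v') \<or> v \<le> u' \<or> v' \<le> u"
proof -
  obtain i where i: "(u,v) \<in> nodes (F i) (real_of_int i) (real_of_int i + 1)" using assms fnodes_iff by blast
  obtain j where j: "(u',v') \<in> nodes (G j) (real_of_int j) (real_of_int j + 1)" using assms fnodes_iff by blast
  have bi: "real_of_int i \<le> u \<and> u < v \<and> v \<le> real_of_int i + 1" using tree_nodes_bounds[OF i] .
  have bj: "real_of_int j \<le> u' \<and> u' < v' \<and> v' \<le> real_of_int j + 1" using tree_nodes_bounds[OF j] .
  show ?thesis
  proof (cases "i = j")
    case True then show ?thesis using nodes_nested[OF i] j by auto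
  next
    case False
    then have "i < j \<or> j < i" by auto
    then have "i + 1 \<le> j \<or> j + 1 \<le> i" by auto
    then have "real_of_int i + 1 \<le> real_of_int j \<or> real_of_int j + 1 \<le> real_of_int i" by linarith
    then show ?thesis using bi bj by auto
  qed
qed

lemma f_leaf_min:
  assumes "(u,v) \<in> forest_leaves F" "(u',v') \<in> fnodes F" "u \<le> u'" "v' \<le> v"
  shows "u' = u \<and> v' = v"
proof -
  obtain i where i: "(u,v) \<in> leaf_ivs (F i) (real_of_int i) (real_of_int i + 1)" using assms fleaves_iff by blast
  obtain j where j: "(u',v') \<in> nodes (F j) (real_of_int j) (real_of_int j + 1)" using assms fnodes_iff by blast
  have bi: "real_of_int i \<le> u \<and> u < v \<and> v \<le> real_of_int i + 1" using tree_leaf_bounds[OF i] .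
  have bj: "real_of_int j \<le> u' \<and> u' < v' \<and> v' \<le> real_of_int j + 1" using tree_nodes_bounds[OF j] .
  have "\<lfloor>u'\<rfloor> = i" using bi bj assms(3,4) by (intro floor_eq_of_bounds) auto
  moreover have "\<lfloor>u'\<rfloor> = j" using bj by (intro floor_eq_of_bounds) auto
  ultimately have "i = j" by simp
  then show ?thesis using leaf_min[OF i] j assms(3,4) by auto
qed

lemma f_caret_not_leaf:
  assumes "(u,v) \<in> forest_carets F" shows "(u,v) \<notin> forest_leaves F"
proof
  assume l: "(u,v) \<in> forest_leaves F"
  obtain i where i: "(u,v) \<in> caret_ivs (F i) (real_of_int i) (real_of_int i + 1)" using assms fcarets_iff by blast
  obtain j where j: "(u,v) \<in> leaf_ivs (F j) (real_of_int j) (real_of_int j + 1)" using l fleaves_iff by blast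
  have "\<lfloor>u\<rfloor> = i" using tree_caret_bounds[OF i] by (intro floor_eq_of_bounds) auto
  moreover have "\<lfloor>u\<rfloor> = j" using tree_leaf_bounds[OF j] by (intro floor_eq_of_bounds) auto
  ultimately show False using caret_not_leaf[OF i] j by auto
qed

lemma f_caret_children:
  assumes "(u,v) \<in> forest_carets F"
  shows "(u,(u+v)/2) \<in> fnodes F" "((u+v)/2, v) \<in> fnodes F"
  using assms caret_children unfolding fcarets_iff fnodes_iff by blast+

lemma f_elem_iff:
  "(u,v) \<in> forest_elem_carets F \<longleftrightarrow>
   (u,v) \<in> forest_carets F \<and> (u,(u+v)/2) \<in> forest_leaves F \<and> ((u+v)/2, v) \<in> forest_leaves F"
proof
  assume "(u,v) \<in> forest_elem_carets F"
  then obtain i where i: "(u,v) \<in> elem_caret_ivs (F i) (real_of_int i) (real_of_int i + 1)" using felem_iff0 by blast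
  then show "(u,v) \<in> forest_carets F \<and> (u,(u+v)/2) \<in> forest_leaves F \<and> ((u+v)/2, v) \<in> forest_leaves F"
    using elem_iff[of "real_of_int i" "real_of_int i + 1"] unfolding fcarets_iff fleaves_iff by auto
next
  assume h: "(u,v) \<in> forest_carets F \<and> (u,(u+v)/2) \<in> forest_leaves F \<and> ((u+v)/2, v) \<in> forest_leaves F"
  obtain i where i: "(u,v) \<in> caret_ivs (F i) (real_of_int i) (real_of_int i + 1)" using h fcarets_iff by blast
  obtain j where j: "(u,(u+v)/2) \<in> leaf_ivs (F j) (real_of_int j) (real_of_int j + 1)" using h fleaves_iff by blast
  obtain k where k: "((u+v)/2,v) \<in> leaf_ivs (F k) (real_of_int k) (real_of_int k + 1)" using h fleaves_iff by blast
  have bi: "real_of_int i \<le> u \<and> u < v \<and> v \<le> real_of_int i + 1" using tree_caret_bounds[OF i] .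
  have "\<lfloor>u\<rfloor> = i" using bi by (intro floor_eq_of_bounds) auto
  moreover have "\<lfloor>u\<rfloor> = j" using tree_leaf_bounds[OF j] by (intro floor_eq_of_bounds) auto
  moreover have "\<lfloor>(u+v)/2\<rfloor> = i" using bi by (intro floor_eq_of_bounds) auto
  moreover have "\<lfloor>(u+v)/2\<rfloor> = k" using tree_leaf_bounds[OF k] by (intro floor_eq_of_bounds) auto
  ultimately have "j = i" "k = i" by auto
  then have "(u,v) \<in> elem_caret_ivs (F i) (real_of_int i) (real_of_int i + 1)"
    using elem_iff[of "real_of_int i" "real_of_int i + 1"] i j k by auto
  then show "(u,v) \<in> forest_elem_carets F" using felem_iff0 by blast
qed

lemma f_leaves_overlap_eq:
  assumes "(u,v) \<in> forest_leaves F" "(u',v') \<in> forest_leaves F" "u < v'" "u' < v"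
  shows "u = u' \<and> v = v'"
proof -
  have n: "(u,v) \<in> fnodes F" "(u',v') \<in> fnodes F" using assms fnodes_eq by auto
  have "(u \<le> u' \<and> v' \<le> v) \<or> (u' \<le> u \<and> v \<le> v')" using f_nested[OF n] assms(3,4) by auto
  then show ?thesis using f_leaf_min[OF assms(1) n(2)] f_leaf_min[OF assms(2) n(1)] by auto
qed

lemma f_cover: "\<exists>u v. (u,v) \<in> forest_leaves F \<and> u \<le> x \<and> x \<le> v"
proof -
  have "real_of_int \<lfloor>x\<rfloor> \<le> x" "x \<le> real_of_int \<lfloor>x\<rfloor> + 1" by linarith+
  then obtain u v where "(u,v) \<in> leaf_ivs (F \<lfloor>x\<rfloor>) (real_of_int \<lfloor>x\<rfloor>) (real_of_int \<lfloor>x\<rfloor> + 1)" "u \<le> x" "x \<le> v"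
    using cover by blast
  then show ?thesis using fleaves_iff by blast
qed

lemma f_point_not_inside:
  assumes "p \<in> forest_points F" "(u,v) \<in> forest_leaves F" "u < p" "p < v"
  shows False
proof -
  obtain q where q: "(p,q) \<in> forest_leaves F" using assms(1) unfolding forest_points_def by auto
  have "p < q" using fleaf_bounds[OF q] .
  then show False using f_leaves_overlap_eq[OF q assms(2)] assms(3,4) by auto
qed

lemma f_caret_has_elem:
  assumes "(u,v) \<in> forest_carets F"
  shows "\<exists>u' v'. (u',v') \<in> forest_elem_carets F \<and> u \<le> u' \<and> v' \<le> v"
proof -
  obtain i where i: "(u,v) \<in> caret_ivs (F i) (real_of_int i) (real_of_int i + 1)" using assms fcarets_iff by blast
  then show ?thesis using caret_has_elem[OF i] felem_iff0 by fastforce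
qed

lemma f_desc_nodes:
  assumes "(u,v) \<in> fnodes F" "(u',v') \<in> fnodes F" "u \<le> u'" "v' \<le> v"
  shows "desc (u,v) (u',v')"
proof -
  obtain i where i: "(u,v) \<in> nodes (F i) (real_of_int i) (real_of_int i + 1)" using assms fnodes_iff by blast
  obtain j where j: "(u',v') \<in> nodes (F j) (real_of_int j) (real_of_int j + 1)" using assms fnodes_iff by blast
  have bi: "real_of_int i \<le> u \<and> u < v \<and> v \<le> real_of_int i + 1" using tree_nodes_bounds[OF i] .
  have bj: "real_of_int j \<le> u' \<and> u' < v' \<and> v' \<le> real_of_int j + 1" using tree_nodes_bounds[OF j] .
  have "\<lfloor>u'\<rfloor> = i" using bi bj assms(3,4) by (intro floor_eq_of_bounds) auto
  moreover have "\<lfloor>u'\<rfloor> = j" using bj by (intro floor_eq_of_bounds) auto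
  ultimately have "i = j" by simp
  then show ?thesis using desc_nodes[OF i, of "(u',v')"] j assms(3,4) by auto
qed

lemma f_path_caret:
  assumes "desc K E" "K \<in> fnodes F" "L \<in> forest_leaves F" "fst E \<le> fst L" "snd L \<le> snd E" "L \<noteq> E"
  shows "E \<in> forest_carets F \<and> E \<in> fnodes F"
  using assms
proof (induction rule: desc.induct)
  case (desc_refl K)
  obtain u v where K: "K = (u,v)" by (cases K)
  obtain p q where L: "L = (p,q)" by (cases L)
  have "K \<notin> forest_leaves F"
  proof
    assume "K \<in> forest_leaves F"
    then show False using f_leaf_min[of u v F p q] desc_refl.prems K L fnodes_eq by auto
  qed
  then show ?case using desc_refl.prems fnodes_eq by auto
next
  case (desc_l K u v)
  obtain p q where L: "L = (p,q)" by (cases L)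
  have pq: "p < q" using fleaf_bounds desc_l.prems(2) L by auto
  have uv: "u < v" using desc_l.prems(3,4) L pq by auto
  have "(u,v) \<in> forest_carets F" using desc_l.IH[OF desc_l.prems(1,2)] desc_l.prems(3,4) L uv by auto
  then have n: "(u,(u+v)/2) \<in> fnodes F" using f_caret_children by blast
  have "(u,(u+v)/2) \<notin> forest_leaves F"
  proof
    assume "(u,(u+v)/2) \<in> forest_leaves F"
    then show False using f_leaf_min[of u "(u+v)/2" F p q] desc_l.prems L fnodes_eq by auto
  qed
  then show ?case using n fnodes_eq by auto
next
  case (desc_r K u v)
  obtain p q where L: "L = (p,q)" by (cases L)
  have pq: "p < q" using fleaf_bounds desc_r.prems(2) L by auto
  have uv: "u < v" using desc_r.prems(3,4) L pq by auto
  have "(u,v) \<in> forest_carets F" using desc_r.IH[OF desc_r.prems(1,2)] desc_r.prems(3,4) L uv by auto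
  then have n: "((u+v)/2,v) \<in> fnodes F" using f_caret_children by blast
  have "((u+v)/2,v) \<notin> forest_leaves F"
  proof
    assume "((u+v)/2,v) \<in> forest_leaves F"
    then show False using f_leaf_min[of "(u+v)/2" v F p q] desc_r.prems L fnodes_eq by auto
  qed
  then show ?case using n fnodes_eq by auto
qed




lemma diag_leaf:
  assumes "forest_diagram f B T" "(u,v) \<in> forest_leaves B"
  shows "(f u, f v) \<in> forest_leaves T"
  using assms unfolding forest_diagram_def by auto

lemma diag_lin:
  assumes "forest_diagram f B T" "(u,v) \<in> forest_leaves B" "u \<le> t" "t \<le> v"
  shows "f t = f u + (f v - f u) / (v - u) * (t - u)"
proof -
  have "\<forall>t\<in>{u..v}. f t = f u + (f v - f u) / (v - u) * (t - u)"
    using assms(1,2) unfolding forest_diagram_def by fastforce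
  then show ?thesis using assms(3,4) by (meson atLeastAtMost_iff)
qed

lemma diag_lin_all:
  assumes "forest_diagram f B T" "(u,v) \<in> forest_leaves B"
  shows "\<forall>t\<in>{u..v}. f t = f u + (f v - f u) / (v - u) * (t - u)"
  by (intro ballI diag_lin[OF assms]) auto

lemma smono_le: "strict_mono f \<Longrightarrow> x \<le> y \<Longrightarrow> (f x :: real) \<le> f y"
  by (metis dual_order.order_iff_strict strict_mono_def)

lemma surj_leaf:
  assumes "forest_diagram f B T" "strict_mono f" "surj f" "(c,d) \<in> forest_leaves T"
  shows "\<exists>u v. (u,v) \<in> forest_leaves B \<and> c = f u \<and> d = f v"
proof -
  have cd: "c < d" using fleaf_bounds assms(4) by blast
  obtain t where t: "f t = (c+d)/2" using assms(3) by (metis surj_def)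
  obtain u v where uv: "(u,v) \<in> forest_leaves B" "u \<le> t" "t \<le> v" using f_cover by blast
  have l: "(f u, f v) \<in> forest_leaves T" using diag_leaf[OF assms(1) uv(1)] .
  have "f u \<le> f t" "f t \<le> f v" using smono_le[OF assms(2)] uv by auto
  then have "c = f u \<and> d = f v" using f_leaves_overlap_eq[OF assms(4) l] t cd by auto
  then show ?thesis using uv by blast
qed

definition fmeet :: "forest \<Rightarrow> forest \<Rightarrow> forest" where
  "fmeet F G = (\<lambda>i. meet (F i) (G i))"

lemma fmeet_comm: "fmeet F G = fmeet G F"
  unfolding fmeet_def using meet_comm by auto

lemma key_meet:
  assumes d1: "forest_diagram f B1 T1" and d2: "forest_diagram f B2 T2" and sm: "strict_mono f" and su: "surj f"
    and J1: "(u,v) \<in> forest_leaves B1" and J2: "(u,v) \<in> fnodes B2"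
  shows "(f u, f v) \<in> forest_leaves (fmeet T1 T2)"
proof -
  have K: "(f u, f v) \<in> forest_leaves T1" using diag_leaf[OF d1 J1] .
  then obtain k where k: "(f u, f v) \<in> leaf_ivs (T1 k) (real_of_int k) (real_of_int k + 1)" using fleaves_iff by blast
  have uv: "u < v" using fleaf_bounds[OF J1] .
  have "(f u, f v) \<in> nodes (T2 k) (real_of_int k) (real_of_int k + 1)"
  proof (rule node_from_leaves)
    show "(f u, f v) \<in> nodes (T1 k) (real_of_int k) (real_of_int k + 1)" using k nodes_eq by auto
    show "real_of_int k < real_of_int k + 1" by simp
    show "\<forall>L\<in>leaf_ivs (T2 k) (real_of_int k) (real_of_int k + 1).
          fst (f u, f v) \<le> fst L \<and> snd L \<le> snd (f u, f v) \<or> snd L \<le> fst (f u, f v) \<or> snd (f u, f v) \<le> fst L"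
    proof
      fix L assume L: "L \<in> leaf_ivs (T2 k) (real_of_int k) (real_of_int k + 1)"
      obtain c d where cd: "L = (c,d)" by (cases L)
      have "(c,d) \<in> forest_leaves T2" using L cd fleaves_iff by blast
      then obtain u' v' where u'v': "(u',v') \<in> forest_leaves B2" "c = f u'" "d = f v'"
        using surj_leaf[OF d2 sm su] by blast
      have n': "(u',v') \<in> fnodes B2" using u'v'(1) fnodes_eq by auto
      have "(u \<le> u' \<and> v' \<le> v) \<or> (u' \<le> u \<and> v \<le> v') \<or> v \<le> u' \<or> v' \<le> u" using f_nested[OF J2 n'] .
      then show "fst (f u, f v) \<le> fst L \<and> snd L \<le> snd (f u, f v) \<or> snd L \<le> fst (f u, f v) \<or> snd (f u, f v) \<le> fst L"
      proof (elim disjE)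
        assume "u \<le> u' \<and> v' \<le> v" then show ?thesis using smono_le[OF sm] cd u'v' by auto
      next
        assume h: "u' \<le> u \<and> v \<le> v'"
        then have "u = u' \<and> v = v'" using f_leaf_min[OF u'v'(1) J2] by auto
        then show ?thesis using cd u'v' by auto
      next
        assume "v \<le> u'" then show ?thesis using smono_le[OF sm] cd u'v' by auto
      next
        assume "v' \<le> u" then show ?thesis using smono_le[OF sm] cd u'v' by auto
      qed
    qed
  qed
  then have "(f u, f v) \<in> leaf_ivs (meet (T1 k) (T2 k)) (real_of_int k) (real_of_int k + 1)"
    using meet_leaf_in[OF k] by simp
  then show ?thesis unfolding fleaves_iff fmeet_def by blast
qed

lemma meet_diagram:
  assumes d1: "forest_diagram f B1 T1" and d2: "forest_diagram f B2 T2" and sm: "strict_mono f" and su: "surj f"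
  shows "forest_diagram f (fmeet B1 B2) (fmeet T1 T2)"
  unfolding forest_diagram_def
proof (intro conjI)
  have "{i. fmeet B1 B2 i \<noteq> Leaf} \<subseteq> {i. B1 i \<noteq> Leaf}" unfolding fmeet_def by auto
  then show "binary_forest (fmeet B1 B2)" using d1 unfolding forest_diagram_def binary_forest_def
    using finite_subset by blast
  have "{i. fmeet T1 T2 i \<noteq> Leaf} \<subseteq> {i. T1 i \<noteq> Leaf}" unfolding fmeet_def by auto
  then show "binary_forest (fmeet T1 T2)" using d1 unfolding forest_diagram_def binary_forest_def
    using finite_subset by blast
  show "\<forall>(a, b)\<in>forest_leaves (fmeet B1 B2). (f a, f b) \<in> forest_leaves (fmeet T1 T2) \<and>
        (\<forall>t\<in>{a..b}. f t = f a + (f b - f a) / (b - a) * (t - a))"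
  proof (clarify)
    fix u v assume J: "(u,v) \<in> forest_leaves (fmeet B1 B2)"
    then obtain i where i: "(u,v) \<in> leaf_ivs (meet (B1 i) (B2 i)) (real_of_int i) (real_of_int i + 1)"
      unfolding fleaves_iff fmeet_def by blast
    have n: "(u,v) \<in> fnodes B1" "(u,v) \<in> fnodes B2"
      using i meet_nodes[of "B1 i" "B2 i"] nodes_eq[of "meet (B1 i) (B2 i)"] unfolding fnodes_iff by blast+
    have "(u,v) \<in> forest_leaves B1 \<or> (u,v) \<in> forest_leaves B2"
      using i meet_leaves unfolding fleaves_iff by blast
    then show "(f u, f v) \<in> forest_leaves (fmeet T1 T2) \<and> (\<forall>t\<in>{u..v}. f t = f u + (f v - f u) / (v - u) * (t - u))"
    proof
      assume l: "(u,v) \<in> forest_leaves B1"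
      show ?thesis using key_meet[OF d1 d2 sm su l n(2)] diag_lin_all[OF d1 l] by blast
    next
      assume l: "(u,v) \<in> forest_leaves B2"
      have "(f u, f v) \<in> forest_leaves (fmeet T2 T1)" using key_meet[OF d2 d1 sm su l n(1)] .
      then have "(f u, f v) \<in> forest_leaves (fmeet T1 T2)" by (simp only: fmeet_comm)
      then show ?thesis using diag_lin_all[OF d2 l] by blast
    qed
  qed
qed

lemma refine_bottom:
  assumes dM: "forest_diagram f (fmeet B1 B2) (fmeet T1 T2)" and r1: "reduced_forest_diagram f B1 T1"
    and sm: "strict_mono f"
  shows "fmeet B1 B2 = B1"
proof (rule ccontr)
  have d1: "forest_diagram f B1 T1" using r1 unfolding reduced_forest_diagram_def by auto
  assume "fmeet B1 B2 \<noteq> B1"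
  then obtain i where "meet (B1 i) (B2 i) \<noteq> B1 i" unfolding fmeet_def by auto
  then have "\<not> leaf_ivs (meet (B1 i) (B2 i)) (real_of_int i) (real_of_int i + 1) \<subseteq> leaf_ivs (B1 i) (real_of_int i) (real_of_int i + 1)"
    using meet_eq_left by force
  then obtain u v where J: "(u,v) \<in> leaf_ivs (meet (B1 i) (B2 i)) (real_of_int i) (real_of_int i + 1)"
    and J1: "(u,v) \<notin> leaf_ivs (B1 i) (real_of_int i) (real_of_int i + 1)" by auto
  have JM: "(u,v) \<in> forest_leaves (fmeet B1 B2)" using J unfolding fleaves_iff fmeet_def by blast
  have "(u,v) \<in> nodes (B1 i) (real_of_int i) (real_of_int i + 1)" using J meet_nodes nodes_eq by blast
  then have "(u,v) \<in> caret_ivs (B1 i) (real_of_int i) (real_of_int i + 1)" using J1 nodes_eq by blast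
  then have Jc: "(u,v) \<in> forest_carets B1" using fcarets_iff by blast
  then have Jn: "(u,v) \<in> fnodes B1" using fnodes_eq by auto
  obtain x z where E: "(x,z) \<in> forest_elem_carets B1" "u \<le> x" "z \<le> v" using f_caret_has_elem[OF Jc] by blast
  define y where "y = (x+z)/2"
  have Ec: "(x,z) \<in> forest_carets B1" and Ly: "(x,y) \<in> forest_leaves B1" and Ry: "(y,z) \<in> forest_leaves B1"
    using E(1) f_elem_iff[of x z B1] unfolding y_def by auto
  have xz: "x < z" using fcaret_bounds[OF Ec] .
  have uv: "u < v" using fcaret_bounds[OF Jc] .
  have En: "(x,z) \<in> fnodes B1" using Ec fnodes_eq by auto
  have dd: "desc (u,v) (x,z)" using f_desc_nodes[OF Jn En E(2,3)] .
  have lin: "\<forall>t\<in>{u..v}. f t = f u + (f v - f u) / (v - u) * (t - u)" using diag_lin_all[OF dM JM] .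
  have dd2: "desc (f u, f v) (f x, f z)" using desc_transport[OF dd uv lin] by simp
  have KS: "(f u, f v) \<in> forest_leaves (fmeet T1 T2)" using diag_leaf[OF dM JM] .
  then obtain k where "(f u, f v) \<in> leaf_ivs (meet (T1 k) (T2 k)) (real_of_int k) (real_of_int k + 1)"
    unfolding fleaves_iff fmeet_def by blast
  then have "(f u, f v) \<in> nodes (T1 k) (real_of_int k) (real_of_int k + 1)" using meet_nodes nodes_eq by blast
  then have Kn: "(f u, f v) \<in> fnodes T1" using fnodes_iff by blast
  have fL: "(f x, f y) \<in> forest_leaves T1" using diag_leaf[OF d1 Ly] .
  have fR: "(f y, f z) \<in> forest_leaves T1" using diag_leaf[OF d1 Ry] .
  have yz: "y < z" using xz y_def by auto
  have fyz: "f y < f z" using sm yz unfolding strict_mono_def by auto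
  have "(f x, f z) \<in> forest_carets T1"
    using f_path_caret[OF dd2 Kn fL] fyz by auto
  moreover have "f y = (f x + f z) / 2"
  proof -
    define c where "c = (f v - f u) / (v - u)"
    have e1: "f x = f u + c * (x - u)" unfolding c_def by (rule bspec[OF lin]) (use E xz in auto)
    have e2: "f z = f u + c * (z - u)" unfolding c_def by (rule bspec[OF lin]) (use E xz in auto)
    have e3: "f y = f u + c * (y - u)" unfolding c_def by (rule bspec[OF lin]) (use E xz y_def in auto)
    show ?thesis unfolding e1 e2 e3 by (simp add: field_simps y_def)
  qed
  ultimately have "(f x, f z) \<in> forest_elem_carets T1" using f_elem_iff fL fR by metis
  then show False using r1 E(1) unfolding reduced_forest_diagram_def by auto
qed

lemma refine_top:
  assumes d1: "forest_diagram f B T1" and dS: "forest_diagram f B (fmeet T1 T2)" and sm: "strict_mono f" and su: "surj f"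
  shows "fmeet T1 T2 = T1"
proof -
  have "meet (T1 k) (T2 k) = T1 k" for k
  proof (rule meet_eq_left)
    show "real_of_int k < real_of_int k + 1" by simp
    show "leaf_ivs (meet (T1 k) (T2 k)) (real_of_int k) (real_of_int k + 1) \<subseteq> leaf_ivs (T1 k) (real_of_int k) (real_of_int k + 1)"
    proof
      fix K assume K: "K \<in> leaf_ivs (meet (T1 k) (T2 k)) (real_of_int k) (real_of_int k + 1)"
      obtain c d where cd: "K = (c,d)" by (cases K)
      have "(c,d) \<in> forest_leaves (fmeet T1 T2)" using K cd unfolding fleaves_iff fmeet_def by blast
      then obtain u v where uv: "(u,v) \<in> forest_leaves B" "c = f u" "d = f v" using surj_leaf[OF dS sm su] by blast
      have "(c,d) \<in> forest_leaves T1" using diag_leaf[OF d1 uv(1)] uv by simp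
      then obtain k' where k': "(c,d) \<in> leaf_ivs (T1 k') (real_of_int k') (real_of_int k' + 1)" using fleaves_iff by blast
      have "\<lfloor>c\<rfloor> = k'" using tree_leaf_bounds[OF k'] by (intro floor_eq_of_bounds) auto
      moreover have "\<lfloor>c\<rfloor> = k" using tree_leaf_bounds[OF K[unfolded cd]] by (intro floor_eq_of_bounds) auto
      ultimately show "K \<in> leaf_ivs (T1 k) (real_of_int k) (real_of_int k + 1)" using k' cd by auto
    qed
  qed
  then show ?thesis unfolding fmeet_def by auto
qed

lemma diagram_unique:
  assumes r1: "reduced_forest_diagram f B1 T1" and r2: "reduced_forest_diagram f B2 T2"
    and sm: "strict_mono f" and su: "surj f"
  shows "B1 = B2 \<and> T1 = T2"
proof -
  have d1: "forest_diagram f B1 T1" using r1 unfolding reduced_forest_diagram_def by auto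
  have d2: "forest_diagram f B2 T2" using r2 unfolding reduced_forest_diagram_def by auto
  have dM: "forest_diagram f (fmeet B1 B2) (fmeet T1 T2)" using meet_diagram[OF d1 d2 sm su] .
  have dM': "forest_diagram f (fmeet B2 B1) (fmeet T2 T1)" using meet_diagram[OF d2 d1 sm su] .
  have b1: "fmeet B1 B2 = B1" using refine_bottom[OF dM r1 sm] .
  have b2: "fmeet B2 B1 = B2" using refine_bottom[OF dM' r2 sm] .
  have t1: "fmeet T1 T2 = T1" using refine_top[OF d1 _ sm su] dM b1 by simp
  have t2: "fmeet T2 T1 = T2" using refine_top[OF d2 _ sm su] dM' b2 by simp
  show ?thesis using b1 b2 t1 t2 fmeet_comm by metis
qed

lemma ell_eq:
  assumes r: "reduced_forest_diagram f B T" and sm: "strict_mono f" and su: "surj f"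
  shows "ell f = ell0_diag f B T + ell1_diag B T"
  unfolding ell_def
proof (rule the_equality)
  show "\<exists>B' T'. reduced_forest_diagram f B' T' \<and> ell0_diag f B T + ell1_diag B T = ell0_diag f B' T' + ell1_diag B' T'"
    using r by blast
  fix n assume "\<exists>B' T'. reduced_forest_diagram f B' T' \<and> n = ell0_diag f B' T' + ell1_diag B' T'"
  then obtain B' T' where "reduced_forest_diagram f B' T'" "n = ell0_diag f B' T' + ell1_diag B' T'" by blast
  then show "n = ell0_diag f B T + ell1_diag B T" using diagram_unique[OF r _ sm su] by metis
qed




lemma glue_mono:
  assumes "strict_mono_on {..a} f" "strict_mono_on {a..b} f" "a \<le> b"
  shows "strict_mono_on {..b} (f :: real \<Rightarrow> real)"
proof (rule strict_mono_onI)
  fix x y assume xy: "x \<in> {..b}" "y \<in> {..b}" "x < y"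
  show "f x < f y"
  proof (cases "y \<le> a")
    case True then show ?thesis using strict_mono_onD[OF assms(1)] xy by auto
  next
    case False
    show ?thesis
    proof (cases "x < a")
      case True
      then have "f x < f a" using strict_mono_onD[OF assms(1)] by auto
      moreover have "f a < f y" using strict_mono_onD[OF assms(2)] False xy by auto
      ultimately show ?thesis by simp
    next
      case F2: False
      then show ?thesis using strict_mono_onD[OF assms(2)] xy by auto
    qed
  qed
qed

lemma glue_mono2:
  assumes "strict_mono_on {..a} f" "strict_mono_on {a..} f"
  shows "strict_mono (f :: real \<Rightarrow> real)"
proof (rule strict_monoI)
  fix x y :: real assume xy: "x < y"
  show "f x < f y"
  proof (cases "y \<le> a")
    case True then show ?thesis using strict_mono_onD[OF assms(1)] xy by auto
  next
    case False
    show ?thesis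
    proof (cases "x < a")
      case True
      then have "f x < f a" using strict_mono_onD[OF assms(1)] by auto
      moreover have "f a < f y" using strict_mono_onD[OF assms(2)] False xy by auto
      ultimately show ?thesis by simp
    next
      case F2: False
      then show ?thesis using strict_mono_onD[OF assms(2)] xy by auto
    qed
  qed
qed

lemma inF_props:
  assumes "in_F f"
  shows "strict_mono f \<and> surj f"
proof -
  obtain ps :: "real list" and m n :: int where
    ne: "ps \<noteq> []" and so: "sorted_wrt (<) ps" and
    lft: "\<forall>t. t \<le> hd ps \<longrightarrow> f t = t - real_of_int m" and
    rgt: "\<forall>t. last ps \<le> t \<longrightarrow> f t = t - real_of_int n" and
    pc: "\<forall>i. Suc i < length ps \<longrightarrow> (\<exists>k::int. \<forall>t\<in>{ps!i..ps!Suc i}. f t = f (ps!i) + (2::real) powi k * (t - ps!i))"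
    using assms unfolding in_F_def by blast
  define L where "L = length ps"
  have L0: "0 < L" using ne L_def by auto
  have lt: "\<And>i. Suc i < L \<Longrightarrow> ps!i < ps!Suc i" using so L_def sorted_wrt_nth_less by fastforce
  have hd: "hd ps = ps!0" using ne hd_conv_nth by auto
  have lst: "last ps = ps!(L-1)" using ne last_conv_nth L_def by auto
  have piece_mono: "strict_mono_on {ps!i..ps!Suc i} f" if iL0: "Suc i < L" for i
  proof -
    obtain k :: int where k: "\<forall>t\<in>{ps!i..ps!Suc i}. f t = f (ps!i) + (2::real) powi k * (t - ps!i)"
      using pc iL0 L_def by blast
    have pos: "(0::real) < 2 powi k" by simp
    show ?thesis
    proof (rule strict_mono_onI)
      fix x y assume "x \<in> {ps!i..ps!Suc i}" "y \<in> {ps!i..ps!Suc i}" "x < y"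
      moreover have "f x = f (ps!i) + (2::real) powi k * (x - ps!i)" using k \<open>x \<in> _\<close> by blast
      moreover have "f y = f (ps!i) + (2::real) powi k * (y - ps!i)" using k \<open>y \<in> _\<close> by blast
      ultimately show "f x < f y" using pos by (simp add: mult_strict_left_mono)
    qed
  qed
  have A: "strict_mono_on {..ps!j} f" if "j < L" for j
    using that
  proof (induction j)
    case 0
    show ?case
    proof (rule strict_mono_onI)
      fix x y assume "x \<in> {..ps!0}" "y \<in> {..ps!0}" "x < y"
      then show "f x < f y" using lft hd by auto
    qed
  next
    case (Suc j)
    then show ?case using glue_mono[OF Suc.IH piece_mono[of j]] lt[of j] by auto
  qed
  have B: "strict_mono_on {last ps..} f"
  proof (rule strict_mono_onI)
    fix x y assume "x \<in> {last ps..}" "y \<in> {last ps..}" "x < y"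
    then show "f x < f y" using rgt by auto
  qed
  have sm: "strict_mono f" using glue_mono2[OF _ B] A[of "L-1"] lst L0 by auto
  have su: "surj f"
  proof (rule surjI)
    fix y :: real
    show "f (SOME t. f t = y) = y"
    proof (rule someI_ex)
      show "\<exists>t. f t = y"
      proof (cases "y \<le> f (ps!0)")
        case True
        have "f (ps!0) = ps!0 - m" using lft hd by auto
        then have "f (y + m) = y" using lft hd True by auto
        then show ?thesis by blast
      next
        case c1: False
        show ?thesis
        proof (cases "f (ps!(L-1)) \<le> y")
          case True
          have "f (ps!(L-1)) = ps!(L-1) - n" using rgt lst by auto
          then have "f (y + n) = y" using rgt lst True by auto
          then show ?thesis by blast
        next
          case c2: False
          define S where "S = {j. j < L \<and> f (ps!j) \<le> y}"
          have fS: "finite S" unfolding S_def by auto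
          have S0: "0 \<in> S" using c1 L0 S_def by auto
          define i where "i = Max S"
          have iS: "i \<in> S" using fS S0 i_def Max_in by blast
          have iL: "Suc i < L"
          proof -
            have "i < L" using iS S_def by auto
            moreover have "i \<noteq> L - 1" using iS c2 S_def by auto
            ultimately show ?thesis by auto
          qed
          have nS: "Suc i \<notin> S" using Max_ge[OF fS] i_def by fastforce
          then have y2: "y < f (ps!Suc i)" using iL S_def by auto
          have y1: "f (ps!i) \<le> y" using iS S_def by auto
          obtain k :: int where k: "\<forall>t\<in>{ps!i..ps!Suc i}. f t = f (ps!i) + (2::real) powi k * (t - ps!i)"
            using pc iL L_def by blast
          have pos: "(0::real) < 2 powi k" by simp
          define t where "t = ps!i + (y - f (ps!i)) / 2 powi k"
          have "f (ps!Suc i) = f (ps!i) + (2::real) powi k * (ps!Suc i - ps!i)"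
            by (rule bspec[OF k]) (use lt[OF iL] in auto)
          then have "(y - f (ps!i)) < 2 powi k * (ps!Suc i - ps!i)" using y2 by linarith
          then have "(y - f (ps!i)) / 2 powi k < ps!Suc i - ps!i" using pos by (simp add: divide_less_eq mult.commute)
          moreover have "0 \<le> (y - f (ps!i)) / 2 powi k" using y1 pos by simp
          ultimately have tin: "t \<in> {ps!i..ps!Suc i}" unfolding t_def by auto
          have "f t = f (ps!i) + (2::real) powi k * (t - ps!i)" using k tin by blast
          also have "\<dots> = y" unfolding t_def using pos by simp
          finally show ?thesis by blast
        qed
      qed
    qed
  qed
  show ?thesis using sm su by blast
qed




fun prune :: "real \<Rightarrow> real \<Rightarrow> tree \<Rightarrow> real \<Rightarrow> real \<Rightarrow> tree" where
  "prune a b Leaf \<alpha> \<beta> = Leaf"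
| "prune a b (Node l r) \<alpha> \<beta> = (if \<alpha> = a \<and> \<beta> = b \<and> l = Leaf \<and> r = Leaf then Leaf
     else Node (prune a b l \<alpha> ((\<alpha>+\<beta>)/2)) (prune a b r ((\<alpha>+\<beta>)/2) \<beta>))"

lemma prune_id: "(a,b) \<notin> caret_ivs t \<alpha> \<beta> \<Longrightarrow> prune a b t \<alpha> \<beta> = t"
  by (induction t arbitrary: \<alpha> \<beta>) auto

lemma prune_props:
  assumes "(a,b) \<in> elem_caret_ivs t \<alpha> \<beta>" "\<alpha> < \<beta>"
  shows "leaf_ivs (prune a b t \<alpha> \<beta>) \<alpha> \<beta> = (leaf_ivs t \<alpha> \<beta> - {(a,(a+b)/2), ((a+b)/2,b)}) \<union> {(a,b)}
    \<and> caret_ivs (prune a b t \<alpha> \<beta>) \<alpha> \<beta> = caret_ivs t \<alpha> \<beta> - {(a,b)}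
    \<and> Suc (ncarets (prune a b t \<alpha> \<beta>)) = ncarets t"
  using assms
proof (induction t arbitrary: \<alpha> \<beta>)
  case Leaf then show ?case by simp
next
  case (Node l r)
  define m where "m = (\<alpha>+\<beta>)/2"
  have m: "\<alpha> < m" "m < \<beta>" using Node.prems by (auto simp: m_def)
  have lb: "\<And>u v. (u,v) \<in> leaf_ivs l \<alpha> m \<Longrightarrow> \<alpha> \<le> u \<and> u < v \<and> v \<le> m" using leaf_bounds m by blast
  have rb: "\<And>u v. (u,v) \<in> leaf_ivs r m \<beta> \<Longrightarrow> m \<le> u \<and> u < v \<and> v \<le> \<beta>" using leaf_bounds m by blast
  have lc: "\<And>u v. (u,v) \<in> caret_ivs l \<alpha> m \<Longrightarrow> \<alpha> \<le> u \<and> u < v \<and> v \<le> m" using caret_bounds m by blast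
  have rc: "\<And>u v. (u,v) \<in> caret_ivs r m \<beta> \<Longrightarrow> m \<le> u \<and> u < v \<and> v \<le> \<beta>" using caret_bounds m by blast
  show ?case
  proof (cases "l = Leaf \<and> r = Leaf")
    case True
    then have "(a,b) = (\<alpha>,\<beta>)" using Node.prems by auto
    then show ?thesis using True by (auto simp: m_def)
  next
    case False
    have e: "(a,b) \<in> elem_caret_ivs l \<alpha> m \<or> (a,b) \<in> elem_caret_ivs r m \<beta>"
      using False Node.prems(1) by (auto simp: m_def)
    show ?thesis
    proof (cases "(a,b) \<in> elem_caret_ivs l \<alpha> m")
      case True
      have ab: "\<alpha> \<le> a \<and> a < b \<and> b \<le> m" using lc True elem_sub_caret by blast
      have nr: "(a,b) \<notin> caret_ivs r m \<beta>" using rc[of a b] ab by auto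
      have pr: "prune a b r m \<beta> = r" using prune_id[OF nr] .
      have ne: "\<not> (\<alpha> = a \<and> \<beta> = b)" using ab m by auto
      have IH: "leaf_ivs (prune a b l \<alpha> m) \<alpha> m = (leaf_ivs l \<alpha> m - {(a,(a+b)/2), ((a+b)/2,b)}) \<union> {(a,b)}
        \<and> caret_ivs (prune a b l \<alpha> m) \<alpha> m = caret_ivs l \<alpha> m - {(a,b)}
        \<and> Suc (ncarets (prune a b l \<alpha> m)) = ncarets l" using Node.IH(1)[OF True m(1)] .
      have x1: "(a,(a+b)/2) \<notin> leaf_ivs r m \<beta>" using rb[of a "(a+b)/2"] ab by auto
      have x2: "((a+b)/2,b) \<notin> leaf_ivs r m \<beta>" using rb[of "(a+b)/2" b] ab by auto
      have p: "prune a b (Node l r) \<alpha> \<beta> = Node (prune a b l \<alpha> m) r" using ne pr by (auto simp: m_def)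
      show ?thesis unfolding p using IH x1 x2 nr ne by (auto simp: m_def)
    next
      case F2: False
      then have True: "(a,b) \<in> elem_caret_ivs r m \<beta>" using e by auto
      have ab: "m \<le> a \<and> a < b \<and> b \<le> \<beta>" using rc True elem_sub_caret by blast
      have nr: "(a,b) \<notin> caret_ivs l \<alpha> m" using lc[of a b] ab by auto
      have pr: "prune a b l \<alpha> m = l" using prune_id[OF nr] .
      have ne: "\<not> (\<alpha> = a \<and> \<beta> = b)" using ab m by auto
      have IH: "leaf_ivs (prune a b r m \<beta>) m \<beta> = (leaf_ivs r m \<beta> - {(a,(a+b)/2), ((a+b)/2,b)}) \<union> {(a,b)}
        \<and> caret_ivs (prune a b r m \<beta>) m \<beta> = caret_ivs r m \<beta> - {(a,b)}
        \<and> Suc (ncarets (prune a b r m \<beta>)) = ncarets r" using Node.IH(2)[OF True m(2)] .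
      have x1: "(a,(a+b)/2) \<notin> leaf_ivs l \<alpha> m" using lb[of a "(a+b)/2"] ab by auto
      have x2: "((a+b)/2,b) \<notin> leaf_ivs l \<alpha> m" using lb[of "(a+b)/2" b] ab by auto
      have p: "prune a b (Node l r) \<alpha> \<beta> = Node l (prune a b r m \<beta>)" using ne pr by (auto simp: m_def)
      show ?thesis unfolding p using IH x1 x2 nr ne by (auto simp: m_def)
    qed
  qed
qed

definition shiftp :: "real \<Rightarrow> real \<times> real \<Rightarrow> real \<times> real" where
  "shiftp c = (\<lambda>(u,v). (u+c, v+c))"

lemma mid_shift: "(a + c + (b + c)) / 2 = (a+b)/2 + (c::real)" by simp

lemma leaf_shift: "leaf_ivs t (a+c) (b+c) = shiftp c ` leaf_ivs t a b"
proof (induction t arbitrary: a b)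
  case (Node l r)
  have e: "(a + c + (b + c)) / 2 = (a+b)/2 + c" by simp
  have "leaf_ivs (Node l r) (a+c) (b+c) = leaf_ivs l (a+c) ((a+b)/2 + c) \<union> leaf_ivs r ((a+b)/2 + c) (b+c)"
    by (simp only: leaf_ivs.simps e)
  then show ?case using Node.IH by (simp add: image_Un shiftp_def)
qed (simp add: shiftp_def)

lemma caret_shift: "caret_ivs t (a+c) (b+c) = shiftp c ` caret_ivs t a b"
proof (induction t arbitrary: a b)
  case (Node l r)
  have e: "(a + c + (b + c)) / 2 = (a+b)/2 + c" by simp
  have "caret_ivs (Node l r) (a+c) (b+c) = insert (a+c,b+c) (caret_ivs l (a+c) ((a+b)/2 + c) \<union> caret_ivs r ((a+b)/2 + c) (b+c))"
    by (simp only: caret_ivs.simps e)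
  then show ?case using Node.IH by (simp add: image_Un shiftp_def)
qed (simp add: shiftp_def)

lemma elem_shift: "elem_caret_ivs t (a+c) (b+c) = shiftp c ` elem_caret_ivs t a b"
proof (induction t arbitrary: a b)
  case (Node l r)
  have e: "(a + c + (b + c)) / 2 = (a+b)/2 + c" by simp
  have "elem_caret_ivs (Node l r) (a+c) (b+c) = (if l = Leaf \<and> r = Leaf then {(a+c,b+c)} else
     elem_caret_ivs l (a+c) ((a+b)/2 + c) \<union> elem_caret_ivs r ((a+b)/2 + c) (b+c))"
    by (simp only: elem_caret_ivs.simps e)
  then show ?case using Node.IH by (simp add: image_Un shiftp_def)
qed (simp add: shiftp_def)

lemma x1_le0: "y \<le> 0 \<Longrightarrow> x1 y = y" unfolding x1_def by auto
lemma x1_ge2: "2 \<le> y \<Longrightarrow> x1 y = y - 1" unfolding x1_def by auto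
lemma x1_mid: "0 \<le> y \<Longrightarrow> y \<le> 2 \<Longrightarrow> x1 y = y / 2" unfolding x1_def by auto

lemma x1_smono: "strict_mono x1"
  unfolding strict_mono_def x1_def by auto

lemma x1_inj: "x1 p = x1 q \<Longrightarrow> p = q"
  using x1_smono strict_mono_eq by metis

lemma x1_surj: "surj x1"
proof (rule surjI)
  fix y :: real
  show "x1 (if y \<le> 0 then y else if y \<le> 1 then 2 * y else y + 1) = y"
    unfolding x1_def by auto
qed




lemma leaf_at_floor: "(u,v) \<in> forest_leaves F \<Longrightarrow> (u,v) \<in> leaf_ivs (F \<lfloor>u\<rfloor>) (real_of_int \<lfloor>u\<rfloor>) (real_of_int \<lfloor>u\<rfloor> + 1)"
proof -
  assume "(u,v) \<in> forest_leaves F"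
  then obtain i where i: "(u,v) \<in> leaf_ivs (F i) (real_of_int i) (real_of_int i + 1)" using fleaves_iff by blast
  have "\<lfloor>u\<rfloor> = i" using tree_leaf_bounds[OF i] by (intro floor_eq_of_bounds) auto
  then show ?thesis using i by simp
qed

lemma caret_at_floor: "(u,v) \<in> forest_carets F \<Longrightarrow> (u,v) \<in> caret_ivs (F \<lfloor>u\<rfloor>) (real_of_int \<lfloor>u\<rfloor>) (real_of_int \<lfloor>u\<rfloor> + 1)"
proof -
  assume "(u,v) \<in> forest_carets F"
  then obtain i where i: "(u,v) \<in> caret_ivs (F i) (real_of_int i) (real_of_int i + 1)" using fcarets_iff by blast
  have "\<lfloor>u\<rfloor> = i" using tree_caret_bounds[OF i] by (intro floor_eq_of_bounds) auto
  then show ?thesis using i by simp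
qed

lemma elem_bounds: "(u,v) \<in> elem_caret_ivs t a b \<Longrightarrow> a < b \<Longrightarrow> a \<le> u \<and> u < v \<and> v \<le> b"
  using caret_bounds elem_sub_caret by blast

definition Tp :: "forest \<Rightarrow> forest" where
  "Tp T = (\<lambda>i. if i = 0 then Leaf else if 1 \<le> i then T (i+1) else T i)"

definition X1 :: "real \<times> real \<Rightarrow> real \<times> real" where
  "X1 = (\<lambda>(u,v). (x1 u, x1 v))"

lemma tp_generic:
  fixes g :: "tree \<Rightarrow> real \<Rightarrow> real \<Rightarrow> (real \<times> real) set"
  assumes shift: "\<And>t a b c. g t (a+c) (b+c) = shiftp c ` g t a b"
    and lf: "\<And>a b. g Leaf a b = {}"
    and bd: "\<And>t a b u v. (u,v) \<in> g t a b \<Longrightarrow> a < b \<Longrightarrow> a \<le> u \<and> u < v \<and> v \<le> b"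
    and T0: "T 0 = Leaf" and T1: "T 1 = Leaf"
  shows "(\<Union>i. g (Tp T i) (real_of_int i) (real_of_int i + 1)) = X1 ` (\<Union>i. g (T i) (real_of_int i) (real_of_int i + 1))"
proof
  have sh: "g (T (i+1)) (real_of_int i) (real_of_int i + 1) = shiftp (-1) ` g (T (i+1)) (real_of_int (i+1)) (real_of_int (i+1) + 1)" for i
  proof -
    have e1: "real_of_int (i+1) + -1 = real_of_int i" by simp
    have e2: "real_of_int (i+1) + 1 + -1 = real_of_int i + 1" by simp
    show ?thesis using shift[of "T (i+1)" "real_of_int (i+1)" "-1" "real_of_int (i+1) + 1"] unfolding e1 e2 .
  qed
  show "(\<Union>i. g (Tp T i) (real_of_int i) (real_of_int i + 1)) \<subseteq> X1 ` (\<Union>i. g (T i) (real_of_int i) (real_of_int i + 1))"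
  proof
    fix K assume "K \<in> (\<Union>i. g (Tp T i) (real_of_int i) (real_of_int i + 1))"
    then obtain i where i: "K \<in> g (Tp T i) (real_of_int i) (real_of_int i + 1)" by blast
    obtain u v where K: "K = (u,v)" by (cases K)
    consider "i = 0" | "1 \<le> i" | "i < 0" by linarith
    then show "K \<in> X1 ` (\<Union>i. g (T i) (real_of_int i) (real_of_int i + 1))"
    proof cases
      case 1 then show ?thesis using i lf by (simp add: Tp_def)
    next
      case 2
      then have "K \<in> g (T (i+1)) (real_of_int i) (real_of_int i + 1)" using i by (simp add: Tp_def)
      then obtain u' v' where uv': "(u',v') \<in> g (T (i+1)) (real_of_int (i+1)) (real_of_int (i+1) + 1)" "K = shiftp (-1) (u',v')"
        using sh by auto
      have bb: "real_of_int (i+1) \<le> u' \<and> u' < v' \<and> v' \<le> real_of_int (i+1) + 1" using bd[OF uv'(1)] by simp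
      then have "2 \<le> u'" "2 \<le> v'" using 2 by linarith+
      then have "K = X1 (u',v')" using uv'(2) by (simp add: X1_def shiftp_def x1_ge2)
      then show ?thesis using uv'(1) by blast
    next
      case 3
      then have g: "K \<in> g (T i) (real_of_int i) (real_of_int i + 1)" using i by (simp add: Tp_def)
      have bb: "real_of_int i \<le> u \<and> u < v \<and> v \<le> real_of_int i + 1" using bd g K by simp
      then have "v \<le> 0" "u \<le> 0" using 3 by linarith+
      then have "K = X1 K" using K by (simp add: X1_def x1_le0)
      then show ?thesis using g by blast
    qed
  qed
  show "X1 ` (\<Union>i. g (T i) (real_of_int i) (real_of_int i + 1)) \<subseteq> (\<Union>i. g (Tp T i) (real_of_int i) (real_of_int i + 1))"
  proof
    fix K assume "K \<in> X1 ` (\<Union>i. g (T i) (real_of_int i) (real_of_int i + 1))"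
    then obtain j u v where j: "(u,v) \<in> g (T j) (real_of_int j) (real_of_int j + 1)" and K: "K = X1 (u,v)" by auto
    have bb: "real_of_int j \<le> u \<and> u < v \<and> v \<le> real_of_int j + 1" using bd j by simp
    consider "j = 0" | "j = 1" | "2 \<le> j" | "j < 0" by linarith
    then show "K \<in> (\<Union>i. g (Tp T i) (real_of_int i) (real_of_int i + 1))"
    proof cases
      case 1 then show ?thesis using j lf T0 by simp
    next
      case 2 then show ?thesis using j lf T1 by simp
    next
      case 3
      have "2 \<le> u" "2 \<le> v" using 3 bb by linarith+
      then have Ke: "K = shiftp (-1) (u,v)" using K by (simp add: X1_def shiftp_def x1_ge2)
      have "Tp T (j-1) = T j" using 3 by (simp add: Tp_def)
      moreover have "K \<in> g (T ((j-1)+1)) (real_of_int (j-1)) (real_of_int (j-1) + 1)"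
        using sh[of "j-1"] j Ke by simp
      ultimately have "K \<in> g (Tp T (j-1)) (real_of_int (j-1)) (real_of_int (j-1) + 1)" by simp
      then show ?thesis by blast
    next
      case 4
      have "v \<le> 0" "u \<le> 0" using 4 bb by linarith+
      then have "K = (u,v)" using K by (simp add: X1_def x1_le0)
      moreover have "Tp T j = T j" using 4 by (simp add: Tp_def)
      ultimately have "K \<in> g (Tp T j) (real_of_int j) (real_of_int j + 1)" using j by simp
      then show ?thesis by blast
    qed
  qed
qed

lemma tp_carets: "T 0 = Leaf \<Longrightarrow> T 1 = Leaf \<Longrightarrow> forest_carets (Tp T) = X1 ` forest_carets T"
  unfolding forest_carets_def
  by (rule tp_generic[where g=caret_ivs, OF caret_shift _ caret_bounds]) auto

lemma tp_elem: "T 0 = Leaf \<Longrightarrow> T 1 = Leaf \<Longrightarrow> forest_elem_carets (Tp T) = X1 ` forest_elem_carets T"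
  unfolding forest_elem_carets_def
  by (rule tp_generic[where g=elem_caret_ivs, OF elem_shift _ elem_bounds]) auto

lemma tp_leaf:
  assumes T0: "T 0 = Leaf" and T1: "T 1 = Leaf" and uv: "(u,v) \<in> forest_leaves T" "(u,v) \<noteq> (0,1)" "(u,v) \<noteq> (1,2)"
  shows "(x1 u, x1 v) \<in> forest_leaves (Tp T) \<and> (v \<le> 0 \<or> 2 \<le> u)"
proof -
  define k where "k = \<lfloor>u\<rfloor>"
  have l: "(u,v) \<in> leaf_ivs (T k) (real_of_int k) (real_of_int k + 1)" using leaf_at_floor[OF uv(1)] k_def by simp
  have bb: "real_of_int k \<le> u \<and> u < v \<and> v \<le> real_of_int k + 1" using tree_leaf_bounds[OF l] .
  have "k \<noteq> 0" using l T0 uv(2) by auto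
  moreover have "k \<noteq> 1" using l T1 uv(3) by auto
  ultimately consider "2 \<le> k" | "k < 0" by linarith
  then show ?thesis
  proof cases
    case 1
    have "2 \<le> u" "2 \<le> v" using 1 bb by linarith+
    then have X: "(x1 u, x1 v) = shiftp (-1) (u,v)" by (simp add: shiftp_def x1_ge2)
    have "leaf_ivs (T k) (real_of_int k + -1) (real_of_int k + 1 + -1) = shiftp (-1) ` leaf_ivs (T k) (real_of_int k) (real_of_int k + 1)"
      by (rule leaf_shift)
    then have "(x1 u, x1 v) \<in> leaf_ivs (T ((k-1)+1)) (real_of_int (k-1)) (real_of_int (k-1) + 1)"
      using X l by simp
    moreover have "Tp T (k-1) = T ((k-1)+1)" using 1 by (simp add: Tp_def)
    ultimately have "(x1 u, x1 v) \<in> leaf_ivs (Tp T (k-1)) (real_of_int (k-1)) (real_of_int (k-1) + 1)" by simp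
    then show ?thesis using \<open>2 \<le> u\<close> fleaves_iff by blast
  next
    case 2
    have "v \<le> 0" "u \<le> 0" using 2 bb by linarith+
    moreover have "Tp T k = T k" using 2 by (simp add: Tp_def)
    ultimately show ?thesis using l fleaves_iff by (metis x1_le0)
  qed
qed

lemma tp_binary: "binary_forest T \<Longrightarrow> binary_forest (Tp T)"
proof -
  assume "binary_forest T"
  then have f: "finite {i. T i \<noteq> Leaf}" unfolding binary_forest_def .
  have "{i. Tp T i \<noteq> Leaf} \<subseteq> (\<lambda>j. j - 1) ` {i. T i \<noteq> Leaf} \<union> {i. T i \<noteq> Leaf}"
  proof
    fix i assume "i \<in> {i. Tp T i \<noteq> Leaf}"
    then have h: "Tp T i \<noteq> Leaf" by simp
    show "i \<in> (\<lambda>j. j - 1) ` {i. T i \<noteq> Leaf} \<union> {i. T i \<noteq> Leaf}"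
    proof (cases "1 \<le> i")
      case True
      then have "T (i+1) \<noteq> Leaf" using h by (simp add: Tp_def)
      then have "i + 1 \<in> {i. T i \<noteq> Leaf}" by simp
      then have "(i+1) - 1 \<in> (\<lambda>j. j - 1) ` {i. T i \<noteq> Leaf}" by blast
      then show ?thesis by simp
    next
      case False
      then show ?thesis using h by (auto simp: Tp_def split: if_splits)
    qed
  qed
  then show "binary_forest (Tp T)" unfolding binary_forest_def using f finite_subset by blast
qed

lemma tp_ncarets:
  assumes "T 0 = Leaf" "T 1 = Leaf"
  shows "(\<Sum>i\<in>{i. Tp T i \<noteq> Leaf}. ncarets (Tp T i)) = (\<Sum>i\<in>{i. T i \<noteq> Leaf}. ncarets (T i))"
proof -
  define h :: "int \<Rightarrow> int" where "h j = (if 2 \<le> j then j - 1 else j)" for j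
  have hT: "Tp T (h j) = T j" if "T j \<noteq> Leaf" for j
  proof -
    have "j \<noteq> 0" "j \<noteq> 1" using that assms by auto
    then show ?thesis by (auto simp: Tp_def h_def)
  qed
  have bij: "bij_betw h {i. T i \<noteq> Leaf} {i. Tp T i \<noteq> Leaf}"
  proof (rule bij_betw_imageI)
    show "inj_on h {i. T i \<noteq> Leaf}"
    proof (rule inj_onI)
      fix x y assume x: "x \<in> {i. T i \<noteq> Leaf}" and y: "y \<in> {i. T i \<noteq> Leaf}" and e: "h x = h y"
      have "x \<noteq> 1" "y \<noteq> 1" using x y assms by auto
      then show "x = y" using e by (auto simp: h_def split: if_splits)
    qed
    show "h ` {i. T i \<noteq> Leaf} = {i. Tp T i \<noteq> Leaf}"
    proof
      show "h ` {i. T i \<noteq> Leaf} \<subseteq> {i. Tp T i \<noteq> Leaf}" using hT by auto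
      show "{i. Tp T i \<noteq> Leaf} \<subseteq> h ` {i. T i \<noteq> Leaf}"
      proof
        fix i assume "i \<in> {i. Tp T i \<noteq> Leaf}"
        then have h1: "Tp T i \<noteq> Leaf" by simp
        show "i \<in> h ` {i. T i \<noteq> Leaf}"
        proof (cases "1 \<le> i")
          case True
          then have "T (i+1) \<noteq> Leaf" "h (i+1) = i" using h1 by (auto simp: Tp_def h_def)
          then show ?thesis by (metis (mono_tags, lifting) image_eqI mem_Collect_eq)
        next
          case False
          then have "i \<noteq> 0" using h1 by (auto simp: Tp_def)
          then have "T i \<noteq> Leaf" "h i = i" using h1 False by (auto simp: Tp_def h_def)
          then show ?thesis by (metis (mono_tags, lifting) image_eqI mem_Collect_eq)
        qed
      qed
    qed
  qed
  have "(\<Sum>i\<in>{i. T i \<noteq> Leaf}. ncarets (T i)) = (\<Sum>j\<in>{i. T i \<noteq> Leaf}. ncarets (Tp T (h j)))"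
    using hT by (intro sum.cong) auto
  also have "\<dots> = (\<Sum>i\<in>{i. Tp T i \<noteq> Leaf}. ncarets (Tp T i))"
    using sum.reindex_bij_betw[OF bij, of "\<lambda>i. ncarets (Tp T i)"] by simp
  finally show ?thesis by simp
qed




definition Bp :: "real \<Rightarrow> real \<Rightarrow> int \<Rightarrow> forest \<Rightarrow> forest" where
  "Bp a b i0 B = B(i0 := prune a b (B i0) (real_of_int i0) (real_of_int i0 + 1))"

context
  fixes f :: "real \<Rightarrow> real" and B T :: forest and a b :: real and i0 :: int
  assumes r: "reduced_forest_diagram f B T" and sm: "strict_mono f" and su: "surj f"
    and T0: "T 0 = Leaf" and T1: "T 1 = Leaf"
    and E0: "(a,b) \<in> elem_caret_ivs (B i0) (real_of_int i0) (real_of_int i0 + 1)"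
    and fa: "f a = 0" and fb: "f b = 2"
begin

abbreviation "mm \<equiv> (a+b)/2"
abbreviation "B' \<equiv> Bp a b i0 B"
abbreviation "T' \<equiv> Tp T"

lemma d: "forest_diagram f B T" using r unfolding reduced_forest_diagram_def by auto

lemma bnds: "real_of_int i0 \<le> a \<and> a < b \<and> b \<le> real_of_int i0 + 1"
  using tree_caret_bounds E0 elem_sub_caret by blast

lemma E0': "(a,b) \<in> caret_ivs (B i0) (real_of_int i0) (real_of_int i0 + 1) \<and>
  (a,mm) \<in> leaf_ivs (B i0) (real_of_int i0) (real_of_int i0 + 1) \<and>
  (mm,b) \<in> leaf_ivs (B i0) (real_of_int i0) (real_of_int i0 + 1)"
  using elem_iff[of "real_of_int i0" "real_of_int i0 + 1" a b "B i0"] E0 by simp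

lemma Lam: "(a,mm) \<in> forest_leaves B" using E0' fleaves_iff by blast
lemma Lmb: "(mm,b) \<in> forest_leaves B" using E0' fleaves_iff by blast
lemma Cab: "(a,b) \<in> forest_carets B" using E0' fcarets_iff by blast
lemma Eab: "(a,b) \<in> forest_elem_carets B" using E0 felem_iff0 by blast

lemma finj: "f u = f v \<Longrightarrow> u = v"
  using sm strict_mono_eq by metis

lemma fm: "f mm = 1"
proof -
  have l: "(0, f mm) \<in> forest_leaves T" using diag_leaf[OF d Lam] fa by simp
  have "(0, f mm) \<in> leaf_ivs (T \<lfloor>0::real\<rfloor>) (real_of_int \<lfloor>0::real\<rfloor>) (real_of_int \<lfloor>0::real\<rfloor> + 1)"
    using leaf_at_floor[OF l] .
  then show ?thesis using T0 by simp
qed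

lemma floor_a: "\<lfloor>a\<rfloor> = i0" using bnds by (intro floor_eq_of_bounds) auto
lemma floor_m: "\<lfloor>mm\<rfloor> = i0" using bnds by (intro floor_eq_of_bounds) auto

lemma Bp_tree: "leaf_ivs (B' i) (real_of_int i) (real_of_int i + 1) =
   (if i = i0 then (leaf_ivs (B i0) (real_of_int i0) (real_of_int i0 + 1) - {(a,mm),(mm,b)}) \<union> {(a,b)}
    else leaf_ivs (B i) (real_of_int i) (real_of_int i + 1))"
  using prune_props[OF E0] by (simp add: Bp_def)

lemma Bp_ctree: "caret_ivs (B' i) (real_of_int i) (real_of_int i + 1) =
   (if i = i0 then caret_ivs (B i0) (real_of_int i0) (real_of_int i0 + 1) - {(a,b)}
    else caret_ivs (B i) (real_of_int i) (real_of_int i + 1))"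
  using prune_props[OF E0] by (simp add: Bp_def)

lemma Bp_ncarets: "Suc (ncarets (B' i0)) = ncarets (B i0)"
  using prune_props[OF E0] by (simp add: Bp_def)

lemma Bp_leaves: "(u,v) \<in> forest_leaves B' \<longleftrightarrow>
   ((u,v) \<in> forest_leaves B \<and> (u,v) \<noteq> (a,mm) \<and> (u,v) \<noteq> (mm,b)) \<or> (u,v) = (a,b)"
proof
  assume "(u,v) \<in> forest_leaves B'"
  then obtain i where i: "(u,v) \<in> leaf_ivs (B' i) (real_of_int i) (real_of_int i + 1)" using fleaves_iff by blast
  have fu: "\<lfloor>u\<rfloor> = i" using tree_leaf_bounds[OF i] by (intro floor_eq_of_bounds) auto
  show "((u,v) \<in> forest_leaves B \<and> (u,v) \<noteq> (a,mm) \<and> (u,v) \<noteq> (mm,b)) \<or> (u,v) = (a,b)"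
  proof (cases "i = i0")
    case True then show ?thesis using i Bp_tree[of i] fleaves_iff by auto
  next
    case False
    then have "(u,v) \<in> leaf_ivs (B i) (real_of_int i) (real_of_int i + 1)" using i Bp_tree[of i] by simp
    moreover have "(u,v) \<noteq> (a,mm)"
    proof
      assume "(u,v) = (a,mm)" then have "u = a" by simp
      then show False using fu floor_a False by simp
    qed
    moreover have "(u,v) \<noteq> (mm,b)"
    proof
      assume "(u,v) = (mm,b)" then have "u = mm" by simp
      then show False using fu floor_m False by metis
    qed
    ultimately show ?thesis using fleaves_iff by blast
  qed
next
  assume h: "((u,v) \<in> forest_leaves B \<and> (u,v) \<noteq> (a,mm) \<and> (u,v) \<noteq> (mm,b)) \<or> (u,v) = (a,b)"
  show "(u,v) \<in> forest_leaves B'"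
  proof (cases "(u,v) = (a,b)")
    case True
    then have "(u,v) \<in> leaf_ivs (B' i0) (real_of_int i0) (real_of_int i0 + 1)" using Bp_tree[of i0] by simp
    then show ?thesis using fleaves_iff by blast
  next
    case False
    then have h2: "(u,v) \<in> forest_leaves B" "(u,v) \<noteq> (a,mm)" "(u,v) \<noteq> (mm,b)" using h by auto
    define k where "k = \<lfloor>u\<rfloor>"
    have "(u,v) \<in> leaf_ivs (B k) (real_of_int k) (real_of_int k + 1)" using leaf_at_floor[OF h2(1)] k_def by simp
    then have "(u,v) \<in> leaf_ivs (B' k) (real_of_int k) (real_of_int k + 1)" using Bp_tree[of k] h2 by auto
    then show ?thesis using fleaves_iff by blast
  qed
qed

lemma Bp_carets: "(u,v) \<in> forest_carets B' \<longleftrightarrow> (u,v) \<in> forest_carets B \<and> (u,v) \<noteq> (a,b)"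
proof
  assume "(u,v) \<in> forest_carets B'"
  then obtain i where i: "(u,v) \<in> caret_ivs (B' i) (real_of_int i) (real_of_int i + 1)" using fcarets_iff by blast
  have fu: "\<lfloor>u\<rfloor> = i" using tree_caret_bounds[OF i] by (intro floor_eq_of_bounds) auto
  show "(u,v) \<in> forest_carets B \<and> (u,v) \<noteq> (a,b)"
  proof (cases "i = i0")
    case True then show ?thesis using i Bp_ctree[of i] fcarets_iff by auto
  next
    case False
    then have "(u,v) \<in> caret_ivs (B i) (real_of_int i) (real_of_int i + 1)" using i Bp_ctree[of i] by simp
    moreover have "(u,v) \<noteq> (a,b)" using fu floor_a False by auto
    ultimately show ?thesis using fcarets_iff by blast
  qed
next
  assume h: "(u,v) \<in> forest_carets B \<and> (u,v) \<noteq> (a,b)"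
  define k where "k = \<lfloor>u\<rfloor>"
  have "(u,v) \<in> caret_ivs (B k) (real_of_int k) (real_of_int k + 1)" using caret_at_floor h k_def by blast
  then have "(u,v) \<in> caret_ivs (B' k) (real_of_int k) (real_of_int k + 1)" using Bp_ctree[of k] h by auto
  then show "(u,v) \<in> forest_carets B'" using fcarets_iff by blast
qed

lemma Bp_binary: "binary_forest B'"
proof -
  have "finite {i. B i \<noteq> Leaf}" using d unfolding forest_diagram_def binary_forest_def by auto
  moreover have "{i. B' i \<noteq> Leaf} \<subseteq> insert i0 {i. B i \<noteq> Leaf}" by (auto simp: Bp_def)
  ultimately show ?thesis unfolding binary_forest_def using finite_subset by blast
qed

lemma other_leaf:
  assumes "(u,v) \<in> forest_leaves B" "(u,v) \<noteq> (a,mm)" "(u,v) \<noteq> (mm,b)"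
  shows "(x1 (f u), x1 (f v)) \<in> forest_leaves T' \<and> (f v \<le> 0 \<or> 2 \<le> f u)"
proof -
  have l: "(f u, f v) \<in> forest_leaves T" using diag_leaf[OF d assms(1)] .
  have "(f u, f v) \<noteq> (0,1)"
  proof
    assume h: "(f u, f v) = (0,1)"
    have "f u = f a" using h fa by simp
    moreover have "f v = f mm" using h fm by simp
    ultimately have "u = a" "v = mm" using finj by blast+
    then show False using assms(2) by simp
  qed
  moreover have "(f u, f v) \<noteq> (1,2)"
  proof
    assume h: "(f u, f v) = (1,2)"
    have "f u = f mm" using h fm by simp
    moreover have "f v = f b" using h fb by simp
    ultimately have "u = mm" "v = b" using finj by blast+
    then show False using assms(3) by simp
  qed
  ultimately show ?thesis using tp_leaf[OF T0 T1 l] by blast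
qed

lemma g_diag: "forest_diagram (x1 \<circ> f) B' T'"
  unfolding forest_diagram_def
proof (intro conjI)
  show "binary_forest B'" by (rule Bp_binary)
  show "binary_forest T'" using d tp_binary unfolding forest_diagram_def by blast
  show "\<forall>(u, v)\<in>forest_leaves B'. ((x1 \<circ> f) u, (x1 \<circ> f) v) \<in> forest_leaves T' \<and>
      (\<forall>t\<in>{u..v}. (x1 \<circ> f) t = (x1 \<circ> f) u + ((x1 \<circ> f) v - (x1 \<circ> f) u) / (v - u) * (t - u))"
  proof (clarify)
    fix u v assume uv: "(u,v) \<in> forest_leaves B'"
    show "((x1 \<circ> f) u, (x1 \<circ> f) v) \<in> forest_leaves T' \<and>
      (\<forall>t\<in>{u..v}. (x1 \<circ> f) t = (x1 \<circ> f) u + ((x1 \<circ> f) v - (x1 \<circ> f) u) / (v - u) * (t - u))"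
    proof (cases "(u,v) = (a,b)")
      case True
      then have u: "u = a" and v: "v = b" by auto
      have x0: "x1 (f a) = 0" "x1 (f b) = 1" using fa fb by (simp_all add: x1_def)
      have "(0,1) \<in> leaf_ivs (T' 0) (real_of_int 0) (real_of_int 0 + 1)" by (simp add: Tp_def)
      then have "(0::real,1::real) \<in> forest_leaves T'" using fleaves_iff by blast
      moreover have "\<forall>t\<in>{a..b}. x1 (f t) = x1 (f a) + (x1 (f b) - x1 (f a)) / (b - a) * (t - a)"
      proof
        fix t assume t: "t \<in> {a..b}"
        have ab: "a < b" using bnds by simp
        have ft: "f t = 2 * ((t - a) / (b - a))"
        proof (cases "t \<le> mm")
          case True
          have "f t = f a + (f mm - f a) / (mm - a) * (t - a)" by (rule diag_lin[OF d Lam]) (use t True in auto)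
          then show ?thesis using fa fm ab by (simp add: field_simps)
        next
          case False
          have "f t = f mm + (f b - f mm) / (b - mm) * (t - mm)" by (rule diag_lin[OF d Lmb]) (use t False in auto)
          then show ?thesis using fb fm ab by (simp add: field_simps)
        qed
        have q1: "0 \<le> 2*((t-a)/(b-a))" using t ab by (intro mult_nonneg_nonneg divide_nonneg_pos) auto
        have q2: "(t-a)/(b-a) \<le> 1" using t ab by (subst divide_le_eq) auto
        have "0 \<le> f t" "f t \<le> 2" unfolding ft using q1 q2 by linarith+
        then have "x1 (f t) = f t / 2" by (rule x1_mid)
        also have "\<dots> = (t - a) / (b - a)" unfolding ft by (rule nonzero_mult_div_cancel_left) simp
        finally show "x1 (f t) = x1 (f a) + (x1 (f b) - x1 (f a)) / (b - a) * (t - a)" unfolding x0 by simp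
      qed
      ultimately show ?thesis unfolding comp_def u v x0 by blast
    next
      case False
      then have h: "(u,v) \<in> forest_leaves B" "(u,v) \<noteq> (a,mm)" "(u,v) \<noteq> (mm,b)" using uv Bp_leaves by auto
      have o: "(x1 (f u), x1 (f v)) \<in> forest_leaves T' \<and> (f v \<le> 0 \<or> 2 \<le> f u)" using other_leaf[OF h] .
      have uvl: "u < v" using fleaf_bounds[OF h(1)] .
      have lin: "\<forall>t\<in>{u..v}. x1 (f t) = x1 (f u) + (x1 (f v) - x1 (f u)) / (v - u) * (t - u)"
      proof
        fix t assume t: "t \<in> {u..v}"
        have ft: "f t = f u + (f v - f u) / (v - u) * (t - u)" by (rule diag_lin[OF d h(1)]) (use t in auto)
        have mo: "f u \<le> f t" "f t \<le> f v" "f u \<le> f v" using smono_le[OF sm] t by auto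
        show "x1 (f t) = x1 (f u) + (x1 (f v) - x1 (f u)) / (v - u) * (t - u)"
        proof (cases "f v \<le> 0")
          case True
          then have "x1 (f t) = f t" "x1 (f u) = f u" "x1 (f v) = f v" using mo by (simp_all add: x1_le0)
          then show ?thesis using ft by simp
        next
          case False
          then have "2 \<le> f u" using o by auto
          then have "x1 (f t) = f t - 1" "x1 (f u) = f u - 1" "x1 (f v) = f v - 1" using mo by (simp_all add: x1_ge2)
          then show ?thesis using ft by simp
        qed
      qed
      show ?thesis unfolding comp_def using o lin by blast
    qed
  qed
qed

lemma g_reduced: "reduced_forest_diagram (x1 \<circ> f) B' T'"
  unfolding reduced_forest_diagram_def
proof (intro conjI g_diag notI)
  assume "\<exists>(x, z)\<in>forest_elem_carets B'. ((x1 \<circ> f) x, (x1 \<circ> f) z) \<in> forest_elem_carets T'"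
  then obtain x z where xz: "(x,z) \<in> forest_elem_carets B'" "(x1 (f x), x1 (f z)) \<in> forest_elem_carets T'" by auto
  have c: "(x,z) \<in> forest_carets B'" "(x,(x+z)/2) \<in> forest_leaves B'" "((x+z)/2,z) \<in> forest_leaves B'"
    using xz(1) f_elem_iff by blast+
  have cB: "(x,z) \<in> forest_carets B" using c(1) Bp_carets by blast
  have xzl: "x < z" using fcaret_bounds[OF cB] .
  obtain p q where pq: "(p,q) \<in> forest_elem_carets T" "x1 (f x) = x1 p" "x1 (f z) = x1 q"
    using xz(2) tp_elem[OF T0 T1] unfolding X1_def by auto
  have pq2: "(f x, f z) \<in> forest_elem_carets T" using pq x1_inj by metis
  show False
  proof (cases "(x,(x+z)/2) \<in> forest_leaves B \<and> ((x+z)/2,z) \<in> forest_leaves B")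
    case True
    then have "(x,z) \<in> forest_elem_carets B" using cB f_elem_iff by blast
    then show False using r pq2 unfolding reduced_forest_diagram_def by auto
  next
    case False
    then have "(x,(x+z)/2) = (a,b) \<or> ((x+z)/2,z) = (a,b)" using c(2,3) Bp_leaves by blast
    then have "x \<le> a \<and> b \<le> z" using xzl by auto
    then have "f x \<le> 0" "2 \<le> f z" using smono_le[OF sm] fa fb by metis+
    moreover have "(f x, f z) \<in> forest_carets T" using pq2 f_elem_iff by blast
    then have "(f x, f z) \<in> caret_ivs (T \<lfloor>f x\<rfloor>) (real_of_int \<lfloor>f x\<rfloor>) (real_of_int \<lfloor>f x\<rfloor> + 1)" using caret_at_floor by blast
    then have "f z - f x \<le> 1" using tree_caret_bounds[of "f x" "f z" "T \<lfloor>f x\<rfloor>" "\<lfloor>f x\<rfloor>"] by linarith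
    ultimately show False by linarith
  qed
qed


lemma g_sm: "strict_mono (x1 \<circ> f)"
  using sm x1_smono unfolding strict_mono_def by auto

lemma g_su: "surj (x1 \<circ> f)"
  using comp_surj[OF su x1_surj] .

lemma i0_supp: "B i0 \<noteq> Leaf" using E0 by auto

lemma ell1_rel: "ell1_diag B' T' + 1 = ell1_diag B T"
proof -
  define SB where "SB = {i. B i \<noteq> Leaf}"
  have fin: "finite SB" using d unfolding SB_def forest_diagram_def binary_forest_def by auto
  have i0S: "i0 \<in> SB" using i0_supp SB_def by auto
  have sub: "{i. B' i \<noteq> Leaf} \<subseteq> SB" unfolding SB_def Bp_def using i0_supp by auto
  have s1: "(\<Sum>i\<in>{i. B' i \<noteq> Leaf}. ncarets (B' i)) = (\<Sum>i\<in>SB. ncarets (B' i))"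
    by (rule sum.mono_neutral_left[OF fin sub]) auto
  have s2: "(\<Sum>i\<in>SB. ncarets (B' i)) = ncarets (B' i0) + (\<Sum>i\<in>SB - {i0}. ncarets (B i))"
    using sum.remove[OF fin i0S, of "\<lambda>i. ncarets (B' i)"] by (simp add: Bp_def)
  have s3: "(\<Sum>i\<in>SB. ncarets (B i)) = ncarets (B i0) + (\<Sum>i\<in>SB - {i0}. ncarets (B i))"
    using sum.remove[OF fin i0S, of "\<lambda>i. ncarets (B i)"] by simp
  have "(\<Sum>i\<in>{i. B' i \<noteq> Leaf}. ncarets (B' i)) + 1 = (\<Sum>i\<in>{i. B i \<noteq> Leaf}. ncarets (B i))"
    using s1 s2 s3 Bp_ncarets SB_def by simp
  then show ?thesis unfolding ell1_diag_def using tp_ncarets[OF T0 T1] by simp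
qed

lemma pts: "forest_points B' = forest_points B - {mm}"
proof
  show "forest_points B' \<subseteq> forest_points B - {mm}"
  proof
    fix p assume "p \<in> forest_points B'"
    then obtain q where pq: "(p,q) \<in> forest_leaves B'" unfolding forest_points_def by auto
    show "p \<in> forest_points B - {mm}"
    proof (cases "(p,q) = (a,b)")
      case True
      then have "p = a" by simp
      moreover have "a \<in> forest_points B" using Lam unfolding forest_points_def by auto
      moreover have "a \<noteq> mm" using bnds by simp
      ultimately show ?thesis by simp
    next
      case False
      then have h: "(p,q) \<in> forest_leaves B" "(p,q) \<noteq> (a,mm)" "(p,q) \<noteq> (mm,b)" using pq Bp_leaves by auto
      have "p \<noteq> mm"
      proof
        assume pm: "p = mm"
        have "p < q" using fleaf_bounds[OF h(1)] .
        then have "p = mm \<and> q = b" using f_leaves_overlap_eq[OF h(1) Lmb] pm bnds by auto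
        then show False using h(3) by simp
      qed
      then show ?thesis using h(1) unfolding forest_points_def by auto
    qed
  qed
  show "forest_points B - {mm} \<subseteq> forest_points B'"
  proof
    fix p assume "p \<in> forest_points B - {mm}"
    then obtain q where pq: "(p,q) \<in> forest_leaves B" and pm: "p \<noteq> mm" unfolding forest_points_def by auto
    show "p \<in> forest_points B'"
    proof (cases "(p,q) = (a,mm)")
      case True
      then have "(p,b) \<in> forest_leaves B'" using Bp_leaves by simp
      then show ?thesis unfolding forest_points_def by auto
    next
      case False
      then have "(p,q) \<in> forest_leaves B'" using Bp_leaves pq pm by auto
      then show ?thesis unfolding forest_points_def by auto
    qed
  qed
qed

lemma col_eq:
  assumes h: "(u,v) \<in> forest_leaves B" "(u,v) \<noteq> (a,mm)" "(u,v) \<noteq> (mm,b)"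
  shows "support_column (x1 \<circ> f) B' T' u v = support_column f B T u v"
proof -
  have o: "(x1 (f u), x1 (f v)) \<in> forest_leaves T' \<and> (f v \<le> 0 \<or> 2 \<le> f u)" using other_leaf[OF h] .
  have uv: "u < v" using fleaf_bounds[OF h(1)] .
  have fuv: "f u < f v" using sm uv unfolding strict_mono_def by auto
  have bB: "(B' \<lfloor>u\<rfloor> \<noteq> Leaf) = (B \<lfloor>u\<rfloor> \<noteq> Leaf)"
  proof (cases "\<lfloor>u\<rfloor> = i0")
    case False then show ?thesis by (simp add: Bp_def)
  next
    case True
    have "B' i0 \<noteq> Leaf"
    proof
      assume L: "B' i0 = Leaf"
      have "(u,v) \<in> leaf_ivs (B i0) (real_of_int i0) (real_of_int i0 + 1)" using leaf_at_floor[OF h(1)] True by simp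
      then have "(u,v) \<in> leaf_ivs (B' i0) (real_of_int i0) (real_of_int i0 + 1)" using Bp_tree[of i0] h by auto
      moreover have "(a,b) \<in> leaf_ivs (B' i0) (real_of_int i0) (real_of_int i0 + 1)" using Bp_tree[of i0] by auto
      ultimately have "(u,v) = (a,b)" using L by simp
      then show False using f_caret_not_leaf[OF Cab] h(1) by simp
    qed
    then show ?thesis using True i0_supp by simp
  qed
  show ?thesis
  proof (cases "f v \<le> 0")
    case True
    have fu0: "f u < 0" using True fuv by simp
    have x: "x1 (f u) = f u" "x1 (f v) = f v" using True fu0 by (simp_all add: x1_le0)
    have fl: "\<lfloor>f u\<rfloor> < 0" using fu0 by linarith
    have "T' \<lfloor>f u\<rfloor> = T \<lfloor>f u\<rfloor>" using fl T0 by (simp add: Tp_def)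
    then show ?thesis unfolding support_column_def comp_def x using bB fu0 by auto
  next
    case False
    then have fu2: "2 \<le> f u" using o by auto
    have x: "x1 (f u) = f u - 1" "x1 (f v) = f v - 1" using fu2 fuv by (simp_all add: x1_ge2)
    have fl: "\<lfloor>f u - 1\<rfloor> = \<lfloor>f u\<rfloor> - 1" by (rule floor_diff_one)
    have fl2: "2 \<le> \<lfloor>f u\<rfloor>" using fu2 by linarith
    have "T' \<lfloor>f u - 1\<rfloor> = T \<lfloor>f u\<rfloor>" using fl fl2 T1 by (simp add: Tp_def)
    then show ?thesis unfolding support_column_def comp_def x using bB fu2 fuv by auto
  qed
qed

lemma col_am: "support_column f B T a mm"
  unfolding support_column_def using fa fm by simp

lemma col_ab: "support_column (x1 \<circ> f) B' T' a b"
  unfolding support_column_def using fa fb by (simp add: x1_def)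

lemma LEQ:
  assumes p: "p \<in> forest_points B" "p \<noteq> mm"
  shows "(\<exists>(u,v)\<in>forest_leaves B'. support_column (x1 \<circ> f) B' T' u v \<and> v \<le> p) \<longleftrightarrow>
         (\<exists>(u,v)\<in>forest_leaves B. support_column f B T u v \<and> v \<le> p)"
proof
  assume "\<exists>(u,v)\<in>forest_leaves B'. support_column (x1 \<circ> f) B' T' u v \<and> v \<le> p"
  then obtain u v where uv: "(u,v) \<in> forest_leaves B'" "support_column (x1 \<circ> f) B' T' u v" "v \<le> p" by auto
  show "\<exists>(u,v)\<in>forest_leaves B. support_column f B T u v \<and> v \<le> p"
  proof (cases "(u,v) = (a,b)")
    case True
    then have "mm \<le> p" using uv(3) bnds by auto
    then show ?thesis using Lam col_am by blast
  next
    case False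
    then have h: "(u,v) \<in> forest_leaves B" "(u,v) \<noteq> (a,mm)" "(u,v) \<noteq> (mm,b)" using uv(1) Bp_leaves by auto
    then show ?thesis using uv col_eq[OF h] by blast
  qed
next
  assume "\<exists>(u,v)\<in>forest_leaves B. support_column f B T u v \<and> v \<le> p"
  then obtain u v where uv: "(u,v) \<in> forest_leaves B" "support_column f B T u v" "v \<le> p" by auto
  have abL: "(a,b) \<in> forest_leaves B'" using Bp_leaves by simp
  show "\<exists>(u,v)\<in>forest_leaves B'. support_column (x1 \<circ> f) B' T' u v \<and> v \<le> p"
  proof (cases "(u,v) = (a,mm) \<or> (u,v) = (mm,b)")
    case True
    have "b \<le> p"
    proof (rule ccontr)
      assume "\<not> b \<le> p"
      moreover have "mm < p" using True uv(3) p(2) bnds by auto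
      ultimately show False using f_point_not_inside[OF p(1) Lmb] by simp
    qed
    then show ?thesis using abL col_ab by blast
  next
    case False
    then have "(u,v) \<in> forest_leaves B'" using uv(1) Bp_leaves by auto
    then show ?thesis using uv col_eq[of u v] False by blast
  qed
qed

lemma REQ:
  assumes p: "p \<in> forest_points B" "p \<noteq> mm"
  shows "(\<exists>(u,v)\<in>forest_leaves B'. support_column (x1 \<circ> f) B' T' u v \<and> p \<le> u) \<longleftrightarrow>
         (\<exists>(u,v)\<in>forest_leaves B. support_column f B T u v \<and> p \<le> u)"
proof
  assume "\<exists>(u,v)\<in>forest_leaves B'. support_column (x1 \<circ> f) B' T' u v \<and> p \<le> u"
  then obtain u v where uv: "(u,v) \<in> forest_leaves B'" "support_column (x1 \<circ> f) B' T' u v" "p \<le> u" by auto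
  show "\<exists>(u,v)\<in>forest_leaves B. support_column f B T u v \<and> p \<le> u"
  proof (cases "(u,v) = (a,b)")
    case True
    then have "p \<le> a" using uv(3) by auto
    then show ?thesis using Lam col_am by blast
  next
    case False
    then have h: "(u,v) \<in> forest_leaves B" "(u,v) \<noteq> (a,mm)" "(u,v) \<noteq> (mm,b)" using uv(1) Bp_leaves by auto
    then show ?thesis using uv col_eq[OF h] by blast
  qed
next
  assume "\<exists>(u,v)\<in>forest_leaves B. support_column f B T u v \<and> p \<le> u"
  then obtain u v where uv: "(u,v) \<in> forest_leaves B" "support_column f B T u v" "p \<le> u" by auto
  have abL: "(a,b) \<in> forest_leaves B'" using Bp_leaves by simp
  show "\<exists>(u,v)\<in>forest_leaves B'. support_column (x1 \<circ> f) B' T' u v \<and> p \<le> u"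
  proof (cases "(u,v) = (a,mm) \<or> (u,v) = (mm,b)")
    case True
    have "p \<le> a"
    proof (rule ccontr)
      assume "\<not> p \<le> a"
      moreover have "p < mm" using True uv(3) p(2) bnds by auto
      ultimately show False using f_point_not_inside[OF p(1) Lam] by simp
    qed
    then show ?thesis using abL col_ab by blast
  next
    case False
    then have "(u,v) \<in> forest_leaves B'" using uv(1) Bp_leaves by auto
    then show ?thesis using uv col_eq[of u v] False by blast
  qed
qed

lemma supp: "support_spaces (x1 \<circ> f) B' T' = support_spaces f B T - {mm}"
proof -
  have "p \<in> support_spaces (x1 \<circ> f) B' T' \<longleftrightarrow> p \<in> support_spaces f B T - {mm}" for p
  proof (cases "p \<in> forest_points B \<and> p \<noteq> mm")
    case True
    then show ?thesis unfolding support_spaces_def using pts LEQ[of p] REQ[of p] by auto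
  next
    case False
    then show ?thesis unfolding support_spaces_def using pts by auto
  qed
  then show ?thesis by blast
qed


lemma lab_LL: "space_label F q = LL \<longleftrightarrow> q \<in> \<int> \<and> q \<le> 0"
  unfolding space_label_def by auto

lemma wLL: "weight LL x = (if x = LL then 2 else 1)"
  by (cases x) auto

lemma fp_range:
  assumes "p \<in> forest_points B'"
  shows "f p \<le> 0 \<or> 2 \<le> f p"
proof -
  obtain q where pq: "(p,q) \<in> forest_leaves B'" using assms unfolding forest_points_def by auto
  show ?thesis
  proof (cases "(p,q) = (a,b)")
    case True then show ?thesis using fa by auto
  next
    case False
    then have h: "(p,q) \<in> forest_leaves B" "(p,q) \<noteq> (a,mm)" "(p,q) \<noteq> (mm,b)" using pq Bp_leaves by auto
    have "f p < f q" using fleaf_bounds[OF h(1)] sm unfolding strict_mono_def by auto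
    then show ?thesis using other_leaf[OF h] by auto
  qed
qed

lemma top_label_eq:
  assumes "f p \<le> 0 \<or> 2 \<le> f p"
  shows "space_label T' (x1 (f p)) = space_label T (f p)"
proof -
  have Z: "x1 (f p) \<in> \<int> \<longleftrightarrow> f p \<in> \<int>"
  proof (cases "f p \<le> 0")
    case True then show ?thesis by (simp add: x1_le0)
  next
    case False
    then have x: "x1 (f p) = f p - 1" using assms by (simp add: x1_ge2)
    show ?thesis unfolding x
      by (metis Ints_1 Ints_diff diff_add_cancel Ints_add)
  qed
  have N: "x1 (f p) \<le> 0 \<longleftrightarrow> f p \<le> 0"
    using assms by (auto simp: x1_le0 x1_ge2)
  have C: "(\<exists>w. (x1 (f p), w) \<in> forest_carets T') \<longleftrightarrow> (\<exists>w. (f p, w) \<in> forest_carets T)"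
  proof
    assume "\<exists>w. (x1 (f p), w) \<in> forest_carets T'"
    then obtain w where "(x1 (f p), w) \<in> X1 ` forest_carets T" using tp_carets[OF T0 T1] by auto
    then obtain p' q' where "(p',q') \<in> forest_carets T" "x1 (f p) = x1 p'" unfolding X1_def by auto
    then show "\<exists>w. (f p, w) \<in> forest_carets T" using x1_inj by metis
  next
    assume "\<exists>w. (f p, w) \<in> forest_carets T"
    then obtain w where "(f p, w) \<in> forest_carets T" by auto
    then have "X1 (f p, w) \<in> forest_carets T'" using tp_carets[OF T0 T1] by auto
    then show "\<exists>w. (x1 (f p), w) \<in> forest_carets T'" unfolding X1_def by auto
  qed
  show ?thesis unfolding space_label_def using Z N C by simp
qed

lemma w_eq:
  assumes p: "p \<in> support_spaces (x1 \<circ> f) B' T'"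
  shows "weight (space_label T' ((x1 \<circ> f) p)) (space_label B' p) = weight (space_label T (f p)) (space_label B p)"
proof -
  have pB': "p \<in> forest_points B'" using p unfolding support_spaces_def by auto
  have top: "space_label T' ((x1 \<circ> f) p) = space_label T (f p)" using top_label_eq[OF fp_range[OF pB']] by simp
  show ?thesis
  proof (cases "f p = 0")
    case True
    have "space_label T (f p) = LL" using True lab_LL by simp
    moreover have "(space_label B' p = LL) = (space_label B p = LL)" using lab_LL by simp
    ultimately show ?thesis using top wLL by metis
  next
    case False
    then have "p \<noteq> a" using fa by auto
    then have "(\<exists>w. (p, w) \<in> forest_carets B') \<longleftrightarrow> (\<exists>w. (p, w) \<in> forest_carets B)" using Bp_carets by auto
    then have "space_label B' p = space_label B p" unfolding space_label_def by simp
    then show ?thesis using top by simp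
  qed
qed

lemma w_m: "weight (space_label T (f mm)) (space_label B mm) = 0"
proof -
  have nc: "\<not> (\<exists>w. (1, w) \<in> forest_carets T)"
  proof
    assume "\<exists>w. (1, w) \<in> forest_carets T"
    then obtain w where "(1, w) \<in> forest_carets T" by auto
    then have "(1, w) \<in> caret_ivs (T \<lfloor>1::real\<rfloor>) (real_of_int \<lfloor>1::real\<rfloor>) (real_of_int \<lfloor>1::real\<rfloor> + 1)" using caret_at_floor by blast
    then show False using T1 by simp
  qed
  have t: "space_label T (f mm) = RR" unfolding space_label_def fm using nc by simp
  have mZ: "mm \<notin> \<int>"
  proof
    assume "mm \<in> \<int>"
    then obtain k where k: "mm = real_of_int k" by (auto elim: Ints_cases)
    then have "\<lfloor>mm\<rfloor> = k" by simp
    then have "mm = real_of_int i0" using floor_m k by simp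
    then show False using bnds by simp
  qed
  have nc2: "\<not> (\<exists>w. (mm, w) \<in> forest_carets B)"
  proof
    assume "\<exists>w. (mm, w) \<in> forest_carets B"
    then obtain w where c: "(mm, w) \<in> forest_carets B" by auto
    have n1: "(mm,w) \<in> fnodes B" using c fnodes_eq by auto
    have n2: "(mm,b) \<in> fnodes B" using Lmb fnodes_eq by auto
    have n3: "(a,b) \<in> fnodes B" using Cab fnodes_eq by auto
    have mw: "mm < w" using fcaret_bounds[OF c] .
    have ab: "a < b" using bnds by simp
    have "w \<noteq> b"
    proof
      assume "w = b" then show False using c Lmb f_caret_not_leaf by auto
    qed
    moreover have "\<not> w < b"
    proof
      assume wb: "w < b"
      then have "mm = mm \<and> w = b" using f_leaf_min[OF Lmb n1] by auto
      then show False using wb by simp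
    qed
    ultimately have "b < w" by simp
    then show False using f_nested[OF n1 n3] ab mw by auto
  qed
  have bl: "space_label B mm = II" unfolding space_label_def using mZ nc2 by simp
  show ?thesis using t bl by simp
qed

lemma sum_remove0: "(w m :: nat) = 0 \<Longrightarrow> sum w S = sum w (S - {m})"
proof (cases "finite S")
  case True
  assume w: "w m = 0"
  show ?thesis
  proof (cases "m \<in> S")
    case True
    then show ?thesis using sum.remove[OF \<open>finite S\<close> True, of w] w by simp
  next
    case False then show ?thesis by simp
  qed
next
  case False
  then have "infinite (S - {m})" by simp
  then show ?thesis using False by simp
qed

lemma ell0_rel: "ell0_diag (x1 \<circ> f) B' T' = ell0_diag f B T"
proof -
  have "ell0_diag (x1 \<circ> f) B' T' = (\<Sum>p\<in>support_spaces (x1 \<circ> f) B' T'. weight (space_label T (f p)) (space_label B p))"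
    unfolding ell0_diag_def using w_eq by (intro sum.cong) auto
  also have "\<dots> = (\<Sum>p\<in>support_spaces f B T - {mm}. weight (space_label T (f p)) (space_label B p))"
    using supp by simp
  also have "\<dots> = (\<Sum>p\<in>support_spaces f B T. weight (space_label T (f p)) (space_label B p))"
    using sum_remove0[of "\<lambda>p. weight (space_label T (f p)) (space_label B p)" mm] w_m by simp
  finally show ?thesis unfolding ell0_diag_def by simp
qed

lemma main_rel: "ell (x1 \<circ> f) + 1 = ell f"
proof -
  have "ell (x1 \<circ> f) = ell0_diag (x1 \<circ> f) B' T' + ell1_diag B' T'" using ell_eq[OF g_reduced g_sm g_su] .
  moreover have "ell f = ell0_diag f B T + ell1_diag B T" using ell_eq[OF r sm su] .
  ultimately show ?thesis using ell0_rel ell1_rel by simp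
qed

end


theorem proposition4p3p5:
  fixes f :: "real \<Rightarrow> real" and B T :: forest
  assumes "in_F f"
    and "reduced_forest_diagram f B T"
    and "T 0 = Leaf" and "T 1 = Leaf"
    and "\<exists>a b. (a, b) \<in> forest_elem_carets B \<and> f a = 0 \<and> f b = 2"
  shows "ell (x1 \<circ> f) + 1 = ell f"
proof -
  have sm: "strict_mono f" and su: "surj f" using inF_props[OF assms(1)] by auto
  obtain a b where ab: "(a,b) \<in> forest_elem_carets B" "f a = 0" "f b = 2" using assms(5) by blast
  obtain i0 where i0: "(a,b) \<in> elem_caret_ivs (B i0) (real_of_int i0) (real_of_int i0 + 1)"
    using ab(1) felem_iff0 by blast
  show ?thesis using main_rel[OF assms(2) sm su assms(3) assms(4) i0 ab(2) ab(3)] .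
qed

end
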